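(* Let $X$ be a Hilbert space, $B$, $(X_\tau)$, $a>0$, $G$, $\varphi$, $\overline{u}$, $u^\dagger$ as in the context with $u^\dagger-\overline{u}=\varphi(G)w$, $\|w\|\le\rho$. For $\alpha>0$ let $\hat u_\alpha:=\overline{u}+G(G+\alpha I)^{-1}(u^\dagger-\overline{u})$ and $r:=\frac{2a+2}{a}$. Then there exist positive constants $C_1,C_2,C_3$ and $\alpha_0\le\|G\|$ such that for all $\alpha\in(0,\alpha_0]$: (i) $\|\hat u_\alpha-u^\dagger\|\le C_1\varphi(\alpha)$; (ii) $\|\hat u_\alpha-u^\dagger\|_{-a}\le C_2\alpha^{1/r}\varphi(\alpha)$; (iii) $\|\hat u_\alpha-\overline{u}\|_1\le C_3\alpha^{-\frac{1}{ra}}\varphi(\alpha)$.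
   Context: $B:\mathcal{D}(B)\subset X\to X$ is a densely defined, selfadjoint, unbounded linear operator with $\|Bu\|\ge m\|u\|$ for all $u\in\mathcal{D}(B)$, some $m>0$. Hilbert scale: $X_\tau=\mathcal{D}(B^\tau)$ for $\tau>0$ and $X_\tau=X$ for $\tau\le0$, with $\|u\|_\tau=\|B^\tau u\|$. $G:=B^{-(2a+2)}$ (bounded, injective, selfadjoint, positive semidefinite). $\kappa>0$, $c\in(0,\|G\|^{-1})$, $\varphi:(0,\|G\|]\to(0,\infty)$, $\varphi(t)=(-\ln(ct))^{-\kappa}$. $\overline{u},u^\dagger\in X$ with $u^\dagger-\overline{u}=\varphi(G)w$ for some $w\in X$, $\|w\|\le\rho$, $\rho>0$. *)

theory Defs
  imports "HOL-Analysis.Analysis" "HOL-Computational_Algebra.Polynomial"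
begin

definition poly_op :: "real poly \<Rightarrow> ('a::real_normed_vector \<Rightarrow> 'a) \<Rightarrow> 'a \<Rightarrow> 'a" where
  "poly_op p T x = (\<Sum>i\<le>degree p. coeff p i *\<^sub>R (T ^^ i) x)"

text \<open>Continuous functional calculus of a bounded, selfadjoint, positive semidefinite
  operator T (spectrum contained in [0, norm T]): f(T) is the operator-norm limit of p(T)
  for polynomials p converging uniformly to f on [0, norm T].\<close>
definition fcalc :: "(real \<Rightarrow> real) \<Rightarrow> ('a::real_normed_vector \<Rightarrow> 'a) \<Rightarrow> 'a \<Rightarrow> 'a" where
  "fcalc f T = (THE S. bounded_linear S \<and>
     (\<forall>\<epsilon>>0. \<exists>\<delta>>0. \<forall>p. (\<forall>t\<in>{0..onorm T}. \<bar>poly p t - f t\<bar> < \<delta>) \<longrightarrow>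
        onorm (\<lambda>x. S x - poly_op p T x) \<le> \<epsilon>))"

definition resolv :: "('a::real_normed_vector \<Rightarrow> 'a) \<Rightarrow> real \<Rightarrow> 'a \<Rightarrow> 'a" where
  "resolv T \<alpha> = (THE R. bounded_linear R \<and> (\<forall>x. R (T x + \<alpha> *\<^sub>R x) = x)
                        \<and> (\<forall>x. T (R x) + \<alpha> *\<^sub>R R x = x))"

definition phi :: "real \<Rightarrow> real \<Rightarrow> real \<Rightarrow> real" where
  "phi c \<kappa> t = (if t \<le> 0 then 0 else (- ln (c * t)) powr (- \<kappa>))"

definition linear_on :: "'a::real_vector set \<Rightarrow> ('a \<Rightarrow> 'a) \<Rightarrow> bool" where
  "linear_on D B \<longleftrightarrow> (\<forall>u\<in>D. \<forall>v\<in>D. B (u + v) = B u + B v) \<and> (\<forall>r. \<forall>u\<in>D. B (r *\<^sub>R u) = r *\<^sub>R B u)"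

definition selfadjoint_unbounded :: "'a::{real_inner,complete_space} set \<Rightarrow> ('a \<Rightarrow> 'a) \<Rightarrow> bool" where
  "selfadjoint_unbounded D B \<longleftrightarrow> subspace D \<and> closure D = UNIV \<and> linear_on D B
     \<and> (\<forall>u\<in>D. \<forall>v\<in>D. inner (B u) v = inner u (B v))
     \<and> (\<forall>v. (\<exists>z. \<forall>u\<in>D. inner (B u) v = inner u z) \<longrightarrow> v \<in> D)
     \<and> \<not> (\<exists>K. \<forall>u\<in>D. norm (B u) \<le> K * norm u)"

text \<open>B^{-s} for s >= 0, defined through the bounded positive inverse Binv = B^{-1}.\<close>
definition neg_pow :: "('a::real_normed_vector \<Rightarrow> 'a) \<Rightarrow> real \<Rightarrow> 'a \<Rightarrow> 'a" where
  "neg_pow Binv s = fcalc (\<lambda>t. t powr s) Binv"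

definition uhat :: "('a::real_normed_vector \<Rightarrow> 'a) \<Rightarrow> 'a \<Rightarrow> 'a \<Rightarrow> real \<Rightarrow> 'a" where
  "uhat G ubar udag \<alpha> = ubar + G (resolv G \<alpha> (udag - ubar))"

end

theory Submission
  imports Defs
begin

lemma poly_op_bound:
  assumes "degree p < n"
  shows "poly_op p T x = (\<Sum>i<n. coeff p i *\<^sub>R (T ^^ i) x)"
proof -
  have "(\<Sum>i<n. coeff p i *\<^sub>R (T ^^ i) x) = (\<Sum>i\<le>degree p. coeff p i *\<^sub>R (T ^^ i) x)"
    by (rule sum.mono_neutral_right) (use assms in \<open>auto simp: coeff_eq_0\<close>)
  then show ?thesis by (simp add: poly_op_def)
qed

lemma poly_op_add: "poly_op (p + q) T x = poly_op p T x + poly_op q T x"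
proof -
  define n where "n = Suc (max (degree p) (degree q))"
  have "degree (p+q) < n" using degree_add_le_max[of p q] by (simp add: n_def)
  moreover have "degree p < n" "degree q < n" by (auto simp: n_def)
  ultimately show ?thesis
    by (simp only: poly_op_bound[of _ n] coeff_add scaleR_add_left sum.distrib)
qed

lemma poly_op_smult: "poly_op (smult c p) T x = c *\<^sub>R poly_op p T x"
proof -
  define n where "n = Suc (degree p)"
  have "degree (smult c p) < n" using degree_smult_le[of c p] by (simp add: n_def)
  moreover have "degree p < n" by (auto simp: n_def)
  ultimately show ?thesis
    by (simp only: poly_op_bound[of _ n] coeff_smult scaleR_sum_right scaleR_scaleR)
qed

lemma poly_op_minus: "poly_op (- p) T x = - poly_op p T x"
  using poly_op_smult[of "-1" p T x] by simp

lemma poly_op_diff: "poly_op (p - q) T x = poly_op p T x - poly_op q T x"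
  using poly_op_add[of p "-q" T x] poly_op_minus[of q T x] by simp

lemma poly_op_zero[simp]: "poly_op 0 T x = 0"
  by (simp add: poly_op_def)

lemma poly_op_const: "poly_op [:c:] T x = c *\<^sub>R x"
  by (simp add: poly_op_def)

lemma poly_op_pCons:
  assumes "linear T"
  shows "poly_op (pCons c p) T x = c *\<^sub>R x + T (poly_op p T x)"
proof -
  define n where "n = Suc (degree p)"
  have d1: "degree (pCons c p) < Suc n" using degree_pCons_le[of c p] by (simp add: n_def)
  have d2: "degree p < n" by (simp add: n_def)
  have "poly_op (pCons c p) T x = (\<Sum>i<Suc n. coeff (pCons c p) i *\<^sub>R (T ^^ i) x)"
    by (rule poly_op_bound[OF d1])
  also have "\<dots> = c *\<^sub>R x + (\<Sum>i<n. coeff p i *\<^sub>R (T ^^ Suc i) x)"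
    by (subst sum.lessThan_Suc_shift) simp
  also have "(\<Sum>i<n. coeff p i *\<^sub>R (T ^^ Suc i) x) = T (\<Sum>i<n. coeff p i *\<^sub>R (T ^^ i) x)"
    using assms by (simp add: linear_sum linear_scale)
  also have "(\<Sum>i<n. coeff p i *\<^sub>R (T ^^ i) x) = poly_op p T x"
    by (rule poly_op_bound[OF d2, symmetric])
  finally show ?thesis .
qed

lemma poly_op_X: "linear T \<Longrightarrow> poly_op [:0,1:] T x = T x"
  by (simp add: poly_op_pCons poly_op_const)

lemma poly_op_mult:
  assumes "linear T"
  shows "poly_op (p * q) T x = poly_op p T (poly_op q T x)"
proof (induction p arbitrary: x)
  case 0
  then show ?case by simp
next
  case (pCons a p)
  have "poly_op (pCons a p * q) T x = poly_op (smult a q + pCons 0 (p * q)) T x"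
    by (simp add: mult_pCons_left)
  also have "\<dots> = a *\<^sub>R poly_op q T x + T (poly_op (p*q) T x)"
    using assms by (simp add: poly_op_add poly_op_smult poly_op_pCons)
  also have "\<dots> = poly_op (pCons a p) T (poly_op q T x)"
    using assms pCons.IH by (simp add: poly_op_pCons)
  finally show ?case .
qed

lemma poly_op_commute:
  assumes "linear T"
  shows "poly_op p T (poly_op q T x) = poly_op q T (poly_op p T x)"
  using poly_op_mult[OF assms, of p q x] poly_op_mult[OF assms, of q p x]
  by (simp add: mult.commute)

lemma funpow_bounded_linear:
  fixes T :: "'a::real_normed_vector \<Rightarrow> 'a"
  assumes "bounded_linear T"
  shows "bounded_linear (T ^^ i)"
proof (induction i)
  case 0
  have "T ^^ 0 = (\<lambda>x. x)" by (simp add: id_def)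
  then show ?case using bounded_linear_ident by metis
next
  case (Suc i)
  then show ?case using bounded_linear_compose[OF assms Suc.IH] by (simp add: o_def)
qed

lemma poly_op_bounded_linear:
  assumes "bounded_linear T"
  shows "bounded_linear (poly_op p T)"
proof -
  have "bounded_linear (\<lambda>x. coeff p i *\<^sub>R (T ^^ i) x)" for i
    using bounded_linear_compose[OF bounded_linear_scaleR_right funpow_bounded_linear[OF assms, of i]]
    by (simp add: o_def)
  then show ?thesis unfolding poly_op_def[abs_def]
    by (intro bounded_linear_sum) auto
qed

definition posop :: "('a::real_inner \<Rightarrow> 'a) \<Rightarrow> bool" where
  "posop T \<longleftrightarrow> bounded_linear T \<and> (\<forall>x y. inner (T x) y = inner x (T y)) \<and> (\<forall>x. 0 \<le> inner (T x) x)"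

lemma funpow_selfadj:
  assumes "bounded_linear T" "\<forall>x y. inner (T x) y = inner x (T y)"
  shows "inner ((T ^^ i) x) y = inner x ((T ^^ i) y)"
proof (induction i arbitrary: y)
  case 0 then show ?case by simp
next
  case (Suc i)
  have "inner ((T ^^ Suc i) x) y = inner ((T ^^ i) x) (T y)" using assms by simp
  also have "\<dots> = inner x ((T ^^ i) (T y))" by (rule Suc.IH)
  also have "(T ^^ i) (T y) = (T ^^ Suc i) y" by (simp add: funpow_swap1)
  finally show ?case .
qed

lemma poly_op_selfadj:
  assumes "bounded_linear T" "\<forall>x y. inner (T x) y = inner x (T y)"
  shows "inner (poly_op p T x) y = inner x (poly_op p T y)"
  unfolding poly_op_def
  by (simp add: inner_sum_left inner_sum_right funpow_selfadj[OF assms])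


lemma posop_bl: "posop T \<Longrightarrow> bounded_linear T" by (simp add: posop_def)
lemma posop_sa: "posop T \<Longrightarrow> inner (T x) y = inner x (T y)" by (simp add: posop_def)
lemma posop_pos: "posop T \<Longrightarrow> 0 \<le> inner (T x) x" unfolding posop_def by blast

lemma quad_nonneg_disc:
  fixes A B C :: real
  assumes H: "\<And>l. 0 \<le> A + 2 * l * B + l * l * C" and C0: "C \<ge> 0"
  shows "B * B \<le> A * C"
proof (cases "C = 0")
  case True
  show ?thesis
  proof (rule ccontr)
    assume "\<not> ?thesis"
    then have "B \<noteq> 0" using True by auto
    have "0 \<le> A + 2 * (- (A + 1) / (2 * B)) * B" using H[of "- (A + 1) / (2 * B)"] True by simp
    also have "\<dots> = -1" using \<open>B \<noteq> 0\<close> by (simp add: field_simps)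
    finally show False by simp
  qed
next
  case False
  have Cp: "C > 0" using False C0 by simp
  have "0 \<le> A + 2 * (- B / C) * B + (- B / C) * (- B / C) * C" by (rule H)
  also have "\<dots> = A - B * B / C" using Cp by (simp add: field_simps)
  finally show ?thesis using Cp by (simp add: field_simps)
qed

lemma posop_cs:
  assumes "posop T"
  shows "inner (T u) v * inner (T u) v \<le> inner (T u) u * inner (T v) v"
proof (rule quad_nonneg_disc)
  fix l :: real
  interpret bounded_linear T using posop_bl[OF assms] .
  have "0 \<le> inner (T (u + l *\<^sub>R v)) (u + l *\<^sub>R v)" by (rule posop_pos[OF assms])
  also have "\<dots> = inner (T u) u + l * inner (T u) v + l * inner (T v) u + l * l * inner (T v) v"
    by (simp add: add scale inner_add_left inner_add_right algebra_simps)
  also have "inner (T v) u = inner (T u) v" using posop_sa[OF assms, of v u] by (simp add: inner_commute)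
  finally show "0 \<le> inner (T u) u + 2 * l * inner (T u) v + l * l * inner (T v) v" by simp
next
  show "0 \<le> inner (T v) v" by (rule posop_pos[OF assms])
qed

lemma posop_inner_le:
  assumes "posop T" "onorm T \<le> L"
  shows "inner (T y) y \<le> L * (norm y * norm y)"
proof -
  have "inner (T y) y \<le> norm (T y) * norm y" by (rule norm_cauchy_schwarz)
  also have "norm (T y) \<le> onorm T * norm y" by (rule onorm[OF posop_bl[OF assms(1)]])
  finally have "inner (T y) y \<le> onorm T * norm y * norm y" by (simp add: mult_right_mono)
  also have "\<dots> \<le> L * (norm y * norm y)" using assms(2) by (simp add: mult_right_mono mult.assoc)
  finally show ?thesis .
qed

lemma posop_sq_le:
  assumes "posop T" "onorm T \<le> L"
  shows "inner (T y) (T y) \<le> L * inner (T y) y"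
proof -
  have cs: "inner (T y) (T y) * inner (T y) (T y) \<le> inner (T y) y * inner (T (T y)) (T y)"
    using posop_cs[OF assms(1), of y "T y"] by simp
  have "inner (T (T y)) (T y) \<le> L * (norm (T y) * norm (T y))" by (rule posop_inner_le[OF assms])
  also have "norm (T y) * norm (T y) = inner (T y) (T y)" by (simp add: dot_square_norm power2_eq_square)
  finally have "inner (T (T y)) (T y) \<le> L * inner (T y) (T y)" .
  moreover have "0 \<le> inner (T y) y" by (rule posop_pos[OF assms(1)])
  ultimately have "inner (T y) (T y) * inner (T y) (T y) \<le> inner (T y) y * (L * inner (T y) (T y))"
    using cs by (smt (verit) mult_left_mono)
  then have "inner (T y) (T y) * inner (T y) (T y) \<le> (L * inner (T y) y) * inner (T y) (T y)"
    by (simp add: algebra_simps)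
  moreover have "inner (T y) (T y) \<ge> 0" by simp
  ultimately show ?thesis
    by (cases "inner (T y) (T y) = 0") (auto simp: mult_le_cancel_right)
qed

inductive good :: "real \<Rightarrow> real poly \<Rightarrow> bool" for L where
  g0: "good L (q * q)"
| g1: "good L (q * ([:0,1:] * q))"
| g2: "good L (q * ([:L,-1:] * q))"
| g3: "good L (q * ([:0,1:] * ([:L,-1:] * q)))"
| gadd: "good L p \<Longrightarrow> good L p' \<Longrightarrow> good L (p + p')"

lemma good_X: "good L p \<Longrightarrow> good L ([:0,1:] * p)"
proof (induction rule: good.induct)
  case (g0 q) then show ?case using good.g1[of L q] by (simp only: mult.assoc mult.commute mult.left_commute)
next
  case (g1 q) then show ?case using good.g0[of L "[:0,1:] * q"] by (simp only: mult.assoc mult.commute mult.left_commute)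
next
  case (g2 q) then show ?case using good.g3[of L q] by (simp only: mult.assoc mult.commute mult.left_commute)
next
  case (g3 q) then show ?case using good.g2[of L "[:0,1:] * q"] by (simp only: mult.assoc mult.commute mult.left_commute)
next
  case (gadd p p') then show ?case using good.gadd by (simp only: distrib_left)
qed

lemma good_LX: "good L p \<Longrightarrow> good L ([:L,-1:] * p)"
proof (induction rule: good.induct)
  case (g0 q) then show ?case using good.g2[of L q] by (simp only: mult.assoc mult.commute mult.left_commute)
next
  case (g1 q) then show ?case using good.g3[of L q] by (simp only: mult.assoc mult.commute mult.left_commute)
next
  case (g2 q) then show ?case using good.g0[of L "[:L,-1:] * q"] by (simp only: mult.assoc mult.commute mult.left_commute)
next
  case (g3 q) then show ?case using good.g1[of L "[:L,-1:] * q"] by (simp only: mult.assoc mult.commute mult.left_commute)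
next
  case (gadd p p') then show ?case using good.gadd by (simp only: distrib_left)
qed

lemma good_sq: "good L p \<Longrightarrow> good L (r * r * p)"
proof (induction rule: good.induct)
  case (g0 q) then show ?case using good.g0[of L "r * q"] by (simp only: mult.assoc mult.commute mult.left_commute)
next
  case (g1 q) then show ?case using good.g1[of L "r * q"] by (simp only: mult.assoc mult.commute mult.left_commute)
next
  case (g2 q) then show ?case using good.g2[of L "r * q"] by (simp only: mult.assoc mult.commute mult.left_commute)
next
  case (g3 q) then show ?case using good.g3[of L "r * q"] by (simp only: mult.assoc mult.commute mult.left_commute)
next
  case (gadd p p') then show ?case using good.gadd by (simp only: distrib_left)
qed

lemma good_const: "c \<ge> 0 \<Longrightarrow> good L [:c:]"
  using good.g0[of L "[:sqrt c:]"] by (simp add: real_sqrt_mult[symmetric])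

lemma good_pos:
  assumes "good L p" "posop T" "onorm T \<le> L"
  shows "0 \<le> inner (poly_op p T x) x"
  using assms(1)
proof (induction rule: good.induct)
  have lin: "linear T" using posop_bl[OF assms(2)] bounded_linear.linear by blast
  have bl: "bounded_linear T" using posop_bl[OF assms(2)] .
  have sa: "\<forall>x y. inner (T x) y = inner x (T y)" using posop_sa[OF assms(2)] by blast
  {
    case (g0 q)
    show ?case using poly_op_selfadj[OF bl sa, of q "poly_op q T x" x]
      by (simp only: poly_op_mult[OF lin] inner_ge_zero)
  next
    case (g1 q)
    have "inner (poly_op (q * ([:0,1:] * q)) T x) x = inner (T (poly_op q T x)) (poly_op q T x)"
      using poly_op_selfadj[OF bl sa, of q _ x]
      by (simp only: poly_op_mult[OF lin] poly_op_X[OF lin])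
    then show ?case using posop_pos[OF assms(2)] by simp
  next
    case (g2 q)
    define y where "y = poly_op q T x"
    have e: "poly_op [:L,-1:] T z = L *\<^sub>R z - T z" for z
      by (simp add: poly_op_pCons[OF lin] poly_op_const linear_0[OF lin] linear_neg[OF lin] linear_diff[OF lin])
    have "inner (poly_op (q * ([:L,-1:] * q)) T x) x = inner (L *\<^sub>R y - T y) y"
      using poly_op_selfadj[OF bl sa, of q _ x]
      by (simp only: poly_op_mult[OF lin] e y_def)
    also have "\<dots> = L * (norm y * norm y) - inner (T y) y"
      by (simp add: inner_diff_left dot_square_norm power2_eq_square)
    also have "\<dots> \<ge> 0" using posop_inner_le[OF assms(2,3), of y] by simp
    finally show ?case .
  next
    case (g3 q)
    define y where "y = poly_op q T x"
    have e: "poly_op [:L,-1:] T z = L *\<^sub>R z - T z" for z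
      by (simp add: poly_op_pCons[OF lin] poly_op_const linear_0[OF lin] linear_neg[OF lin] linear_diff[OF lin])
    have "inner (poly_op (q * ([:0,1:] * ([:L,-1:] * q))) T x) x = inner (T (L *\<^sub>R y - T y)) y"
      using poly_op_selfadj[OF bl sa, of q _ x]
      by (simp only: poly_op_mult[OF lin] poly_op_X[OF lin] e y_def)
    also have "\<dots> = L * inner (T y) y - inner (T (T y)) y"
      using bl by (simp add: inner_diff_left linear_diff[OF lin] linear_scale[OF lin])
    also have "inner (T (T y)) y = inner (T y) (T y)" using sa by simp
    finally show ?case using posop_sq_le[OF assms(2,3), of y] by simp
  next
    case (gadd p p')
    then show ?case by (simp add: poly_op_add inner_add_left)
  }
qed


lemma deg0_const: "degree p = 0 \<Longrightarrow> p = [:coeff p 0:]"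
  by (rule poly_eqI) (auto simp: coeff_pCons coeff_eq_0 split: nat.split)

lemma poly_right_lim_nonneg:
  fixes q :: "real poly"
  assumes "r < b" "\<forall>t\<in>{r<..b}. 0 \<le> poly q t"
  shows "0 \<le> poly q r"
proof (rule tendsto_lowerbound)
  show "((\<lambda>t. poly q t) \<longlongrightarrow> poly q r) (at_right r)"
    by (rule tendsto_poly) (rule tendsto_ident_at)
  show "\<forall>\<^sub>F t in at_right r. 0 \<le> poly q t"
    using eventually_at_right_real[OF assms(1)] by eventually_elim (use assms(2) in auto)
  show "at_right r \<noteq> bot" by simp
qed

lemma poly_left_lim_nonneg:
  fixes q :: "real poly"
  assumes "a < r" "\<forall>t\<in>{a..<r}. 0 \<le> poly q t"
  shows "0 \<le> poly q r"
proof (rule tendsto_lowerbound)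
  show "((\<lambda>t. poly q t) \<longlongrightarrow> poly q r) (at_left r)"
    by (rule tendsto_poly) (rule tendsto_ident_at)
  show "\<forall>\<^sub>F t in at_left r. 0 \<le> poly q t"
    using eventually_at_left_real[OF assms(1)] by eventually_elim (use assms(2) in auto)
  show "at_left r \<noteq> bot" by simp
qed

lemma nonneg_good:
  assumes L: "0 < L"
  shows "(\<forall>t\<in>{0..L}. 0 \<le> poly p t) \<Longrightarrow> good L p"
proof (induction "degree p" arbitrary: p rule: less_induct)
  case less
  show ?case
  proof (cases "degree p = 0")
    case True
    obtain c where pc: "p = [:c:]" using deg0_const[OF True] by blast
    have "0 \<in> {0..L}" using L by simp
    then have "0 \<le> poly p 0" using less.prems by blast
    then have "0 \<le> c" using pc by simp
    then show ?thesis using pc good_const by simp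
  next
    case False
    obtain r where r: "r \<in> {0..L}" "\<forall>t\<in>{0..L}. poly p r \<le> poly p t"
      using continuous_attains_inf[OF compact_Icc _ continuous_on_poly[OF continuous_on_id], of 0 L p] L
      by auto
    define m where "m = poly p r"
    have m0: "0 \<le> m" using less.prems r by (simp add: m_def)
    define p' where "p' = p - [:m:]"
    have p'nn: "\<forall>t\<in>{0..L}. 0 \<le> poly p' t" using r by (simp add: p'_def m_def)
    have "poly p' r = 0" by (simp add: p'_def m_def)
    then obtain q1 where q1: "p' = [:-r,1:] * q1" using poly_eq_0_iff_dvd by (metis dvdE)
    have dp': "degree p' = degree p"
    proof (rule antisym)
      show "degree p' \<le> degree p" unfolding p'_def using degree_diff_le_max[of p "[:m:]"] by simp
      have "coeff p' (degree p) = coeff p (degree p)" using False by (cases "degree p") (simp_all add: p'_def)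
      then have "coeff p' (degree p) \<noteq> 0" using False by auto
      then show "degree p \<le> degree p'" by (rule le_degree)
    qed
    have "p' \<noteq> 0" using dp' False by auto
    then have "q1 \<noteq> 0" using q1 by auto
    then have "degree ([:-r,1:] * q1) = degree [:-r,1:] + degree q1" by (intro degree_mult_eq) auto
    then have dq1: "degree p' = Suc (degree q1)" using q1 by simp
    have pp: "p = p' + [:m:]" by (simp add: p'_def)
    have fin: "good L p' \<Longrightarrow> good L p" using pp good.gadd[of L p' "[:m:]"] good_const[OF m0] by simp
    have q1v: "poly p' t = (t - r) * poly q1 t" for t by (simp add: q1 algebra_simps)
    consider "r = 0" | "r = L" | "0 < r" "r < L" using r by fastforce
    then show ?thesis
    proof cases
      case 1
      have "\<forall>t\<in>{0<..L}. 0 \<le> poly q1 t"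
        using p'nn q1v 1 by (auto simp: zero_le_mult_iff)
      then have "0 \<le> poly q1 0" using poly_right_lim_nonneg[OF L] by blast
      then have "\<forall>t\<in>{0..L}. 0 \<le> poly q1 t" using \<open>\<forall>t\<in>{0<..L}. _\<close> by (metis atLeastAtMost_iff greaterThanAtMost_iff order_le_less)
      then have "good L q1" using less.hyps[of q1] dq1 dp' by simp
      then have "good L ([:0,1:] * q1)" by (rule good_X)
      then show ?thesis using fin q1 1 by simp
    next
      case 2
      have "\<forall>t\<in>{0..<L}. 0 \<le> poly (-q1) t"
      proof
        fix t assume t: "t \<in> {0..<L}"
        then have "0 \<le> (t - r) * poly q1 t" using p'nn q1v by (metis atLeastAtMost_iff atLeastLessThan_iff less_imp_le)
        moreover have "t - r < 0" using t 2 by simp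
        ultimately show "0 \<le> poly (-q1) t" by (simp add: zero_le_mult_iff)
      qed
      then have "0 \<le> poly (-q1) L" using poly_left_lim_nonneg[OF L] by blast
      then have "\<forall>t\<in>{0..L}. 0 \<le> poly (-q1) t" using \<open>\<forall>t\<in>{0..<L}. _\<close> by (metis atLeastAtMost_iff atLeastLessThan_iff order_le_less)
      then have "good L (-q1)" using less.hyps[of "-q1"] dq1 dp' by simp
      then have "good L ([:L,-1:] * (-q1))" by (rule good_LX)
      moreover have "[:L,-1:] * (-q1) = p'" using q1 2 by simp
      ultimately show ?thesis using fin by simp
    next
      case 3
      have a: "\<forall>t\<in>{r<..L}. 0 \<le> poly q1 t"
        using p'nn q1v 3 by (auto simp: zero_le_mult_iff)
      have b: "\<forall>t\<in>{0..<r}. 0 \<le> poly (-q1) t"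
      proof
        fix t assume t: "t \<in> {0..<r}"
        then have "0 \<le> (t - r) * poly q1 t" using p'nn q1v 3 by (metis atLeastAtMost_iff atLeastLessThan_iff less_imp_le order.strict_trans)
        moreover have "t - r < 0" using t by simp
        ultimately show "0 \<le> poly (-q1) t" by (simp add: zero_le_mult_iff)
      qed
      have "0 \<le> poly q1 r" using poly_right_lim_nonneg[OF 3(2) a] .
      moreover have "0 \<le> poly (-q1) r" using poly_left_lim_nonneg[OF 3(1) b] .
      ultimately have "poly q1 r = 0" by simp
      then obtain q where q: "q1 = [:-r,1:] * q" using poly_eq_0_iff_dvd by (metis dvdE)
      have "q \<noteq> 0" using \<open>q1 \<noteq> 0\<close> q by auto
      then have "degree ([:-r,1:] * q) = degree [:-r,1:] + degree q" by (intro degree_mult_eq) auto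
      then have dq: "degree q1 = Suc (degree q)" using q by simp
      have pv: "poly p' t = (t - r) * (t - r) * poly q t" for t by (simp add: q1 q algebra_simps)
      have c: "\<forall>t\<in>{0..L}. t \<noteq> r \<longrightarrow> 0 \<le> poly q t"
      proof (intro ballI impI)
        fix t assume "t \<in> {0..L}" "t \<noteq> r"
        then have "t - r \<noteq> 0" by simp
        then have "0 < (t - r) * (t - r)" by (metis not_real_square_gt_zero)
        moreover have "0 \<le> (t - r) * (t - r) * poly q t" using p'nn pv \<open>t \<in> {0..L}\<close> by metis
        ultimately show "0 \<le> poly q t" by (simp add: zero_le_mult_iff)
      qed
      have "\<forall>t\<in>{r<..L}. 0 \<le> poly q t" using c 3 by auto
      then have "0 \<le> poly q r" by (rule poly_right_lim_nonneg[OF 3(2)])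
      then have "\<forall>t\<in>{0..L}. 0 \<le> poly q t" using c by metis
      then have "good L q" using less.hyps[of q] dq dq1 dp' by simp
      then have "good L ([:-r,1:] * [:-r,1:] * q)" by (rule good_sq)
      moreover have "[:-r,1:] * [:-r,1:] * q = p'" using q1 q by (simp only: mult.assoc)
      ultimately show ?thesis using fin by simp
    qed
  qed
qed

lemma poly_op_norm_le:
  assumes L: "0 < L" and T: "posop T" "onorm T \<le> L"
    and M: "\<forall>t\<in>{0..L}. \<bar>poly p t\<bar> \<le> M"
  shows "norm (poly_op p T x) \<le> M * norm x"
proof -
  have lin: "linear T" using posop_bl[OF T(1)] bounded_linear.linear by blast
  have bl: "bounded_linear T" using posop_bl[OF T(1)] .
  have sa: "\<forall>x y. inner (T x) y = inner x (T y)" using posop_sa[OF T(1)] by blast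
  have "0 \<in> {0..L}" using L by simp
  then have "\<bar>poly p 0\<bar> \<le> M" using M by blast
  then have M0: "0 \<le> M" by (rule order_trans[OF abs_ge_zero])
  define q where "q = [:M*M:] - p * p"
  have "\<forall>t\<in>{0..L}. 0 \<le> poly q t"
  proof
    fix t assume "t \<in> {0..L}"
    then have "\<bar>poly p t\<bar> \<le> M" using M by blast
    then have "poly p t * poly p t \<le> M * M"
      using abs_mult_self_eq[of "poly p t"] mult_mono[OF _ _ abs_ge_zero, of "\<bar>poly p t\<bar>" M "\<bar>poly p t\<bar>" M] M0 by simp
    then show "0 \<le> poly q t" by (simp add: q_def)
  qed
  then have "good L q" by (rule nonneg_good[OF L])
  then have "0 \<le> inner (poly_op q T x) x" by (rule good_pos[OF _ T])
  also have "inner (poly_op q T x) x = M * M * inner x x - inner (poly_op p T x) (poly_op p T x)"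
    using poly_op_selfadj[OF bl sa, of p "poly_op p T x" x]
    by (simp only: q_def poly_op_diff poly_op_const poly_op_mult[OF lin] inner_diff_left inner_scaleR_left)
  finally have "inner (poly_op p T x) (poly_op p T x) \<le> M * M * inner x x" by simp
  moreover have ii: "inner y y = norm y * norm y" for y :: 'a by (simp add: dot_square_norm power2_eq_square)
  ultimately have "norm (poly_op p T x) * norm (poly_op p T x) \<le> (M * norm x) * (M * norm x)"
    by (simp only: ii mult_ac)
  then have "norm (poly_op p T x) ^ 2 \<le> (M * norm x) ^ 2" by (simp add: power2_eq_square)
  then show ?thesis by (rule power2_le_imp_le) (use M0 in simp)
qed


lemma le_eps_zero:
  fixes a b :: real
  assumes "\<And>e. e > 0 \<Longrightarrow> a \<le> e * b" "0 \<le> b"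
  shows "a \<le> 0"
proof (rule ccontr)
  assume "\<not> a \<le> 0"
  then have a: "a > 0" by simp
  have "a \<le> (a / (2 * (b + 1))) * b" using assms(1)[of "a / (2 * (b + 1))"] a assms(2) by simp
  also have "\<dots> = a * (b / (2 * (b + 1)))" by simp
  also have "\<dots> < a * 1"
    using a assms(2) by (intro mult_strict_left_mono) (auto simp: field_simps)
  finally show False by simp
qed

lemma weier_poly:
  fixes f :: "real \<Rightarrow> real"
  assumes "continuous_on {a..b} f" "0 < e"
  shows "\<exists>p. \<forall>t\<in>{a..b}. \<bar>poly p t - f t\<bar> < e"
proof -
  obtain g where g: "real_polynomial_function g" "\<And>x. x \<in> {a..b} \<Longrightarrow> \<bar>f x - g x\<bar> < e"
    using Stone_Weierstrass_real_polynomial_function[OF compact_Icc assms] by blast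
  obtain c n where gc: "g = (\<lambda>x. \<Sum>i\<le>n. c i * x^i)"
    using real_polynomial_function_imp_sum[OF g(1)] by blast
  define p where "p = (\<Sum>i\<le>n. monom (c i) i)"
  have "poly p x = g x" for x by (simp add: p_def gc poly_sum poly_monom)
  then show ?thesis using g(2) by (metis abs_minus_commute)
qed

lemma cont_bound:
  fixes f :: "real \<Rightarrow> real"
  assumes "continuous_on {a..b} f" "a \<le> b"
  shows "\<exists>M. \<forall>t\<in>{a..b}. \<bar>f t\<bar> \<le> M"
proof -
  have "continuous_on {a..b} (\<lambda>t. \<bar>f t\<bar>)" using assms(1) by (intro continuous_intros)
  from continuous_attains_sup[OF compact_Icc _ this] assms(2) show ?thesis by auto
qed

lemma poly_op_diff_norm:
  assumes L: "0 < onorm T" and T: "posop T"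
    and p: "\<forall>t\<in>{0..onorm T}. \<bar>poly p t - f t\<bar> \<le> a"
    and q: "\<forall>t\<in>{0..onorm T}. \<bar>poly q t - f t\<bar> \<le> b"
  shows "norm (poly_op p T x - poly_op q T x) \<le> (a + b) * norm x"
proof -
  have "\<forall>t\<in>{0..onorm T}. \<bar>poly (p - q) t\<bar> \<le> a + b"
  proof
    fix t assume "t \<in> {0..onorm T}"
    then have "\<bar>poly p t - f t\<bar> \<le> a" "\<bar>poly q t - f t\<bar> \<le> b" using p q by auto
    then show "\<bar>poly (p - q) t\<bar> \<le> a + b" by simp
  qed
  from poly_op_norm_le[OF L T order.refl this, of x] show ?thesis by (simp add: poly_op_diff)
qed

lemma fcalc_main:
  fixes T :: "'a::{real_inner,complete_space} \<Rightarrow> 'a"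
  assumes L: "0 < onorm T" and T: "posop T" and f: "continuous_on {0..onorm T} f"
  shows "bounded_linear (fcalc f T) \<and>
    (\<forall>p \<eta> x. (\<forall>t\<in>{0..onorm T}. \<bar>poly p t - f t\<bar> \<le> \<eta>) \<longrightarrow>
        norm (fcalc f T x - poly_op p T x) \<le> \<eta> * norm x)"
proof -
  define I where "I = {0..onorm T}"
  have "\<forall>n. \<exists>p. \<forall>t\<in>I. \<bar>poly p t - f t\<bar> < inverse (real (Suc n))"
    using weier_poly[OF f] unfolding I_def by simp
  then obtain P where P: "\<And>n. \<forall>t\<in>I. \<bar>poly (P n) t - f t\<bar> < inverse (real (Suc n))"
    by metis
  have Pl: "\<And>n. \<forall>t\<in>I. \<bar>poly (P n) t - f t\<bar> \<le> inverse (real (Suc n))"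
    using P less_imp_le by blast
  have blp: "bounded_linear (poly_op p T)" for p by (rule poly_op_bounded_linear[OF posop_bl[OF T]])
  have cau: "Cauchy (\<lambda>n. poly_op (P n) T x)" for x
  proof (rule metric_CauchyI)
    fix e :: real assume e: "0 < e"
    obtain N :: nat where N: "inverse (real (Suc N)) < e / (2 * (norm x + 1))"
    proof -
      have "0 < e / (2 * (norm x + 1))" using e by (intro divide_pos_pos) (auto intro: add_nonneg_pos)
      from reals_Archimedean[OF this] show ?thesis using that by blast
    qed
    show "\<exists>M. \<forall>m\<ge>M. \<forall>n\<ge>M. dist (poly_op (P m) T x) (poly_op (P n) T x) < e"
    proof (intro exI allI impI)
      fix m n assume mn: "N \<le> m" "N \<le> n"
      have im: "inverse (real (Suc m)) \<le> inverse (real (Suc N))" using mn by (simp add: field_simps)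
      have inn: "inverse (real (Suc n)) \<le> inverse (real (Suc N))" using mn by (simp add: field_simps)
      have "dist (poly_op (P m) T x) (poly_op (P n) T x)
          \<le> (inverse (real (Suc m)) + inverse (real (Suc n))) * norm x"
        unfolding dist_norm by (rule poly_op_diff_norm[OF L T]) (use Pl in \<open>auto simp: I_def\<close>)
      also have "\<dots> \<le> (2 * inverse (real (Suc N))) * norm x"
      proof -
        have "inverse (real (Suc m)) + inverse (real (Suc n)) \<le> 2 * inverse (real (Suc N))" using im inn by linarith
        then show ?thesis by (rule mult_right_mono) simp
      qed
      also have "\<dots> \<le> (2 * (e / (2 * (norm x + 1)))) * norm x"
        by (intro mult_right_mono) (use N in auto)
      also have "\<dots> = e * (norm x / (norm x + 1))"
      proof -
        have "norm x + 1 \<noteq> 0" "1 + norm x \<noteq> 0" using norm_ge_zero[of x] by linarith+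
        then show ?thesis by (simp add: field_simps)
      qed
      also have "\<dots> < e * 1"
      proof (intro mult_strict_left_mono e)
        have "norm x < norm x + 1" by simp
        moreover have "0 < norm x + 1" using norm_ge_zero[of x] by linarith
        ultimately show "norm x / (norm x + 1) < 1" by (simp add: divide_less_eq_1)
      qed
      finally show "dist (poly_op (P m) T x) (poly_op (P n) T x) < e" by simp
    qed
  qed
  define S where "S x = lim (\<lambda>n. poly_op (P n) T x)" for x
  have lim: "(\<lambda>n. poly_op (P n) T x) \<longlonglongrightarrow> S x" for x
    unfolding S_def using Cauchy_convergent[OF cau] by (simp add: convergent_LIMSEQ_iff)
  have KE: "norm (S x - poly_op p T x) \<le> \<eta> * norm x"
    if pe: "\<forall>t\<in>I. \<bar>poly p t - f t\<bar> \<le> \<eta>" for p \<eta> x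
  proof (rule tendsto_le[OF trivial_limit_sequentially])
    show "(\<lambda>n. norm (poly_op (P n) T x - poly_op p T x)) \<longlonglongrightarrow> norm (S x - poly_op p T x)"
      by (intro tendsto_intros lim)
    show "(\<lambda>n. (inverse (real (Suc n)) + \<eta>) * norm x) \<longlonglongrightarrow> \<eta> * norm x"
      using tendsto_mult[OF tendsto_add[OF LIMSEQ_inverse_real_of_nat tendsto_const[of \<eta>]] tendsto_const[of "norm x"]]
      by simp
    show "\<forall>\<^sub>F n in sequentially. norm (poly_op (P n) T x - poly_op p T x) \<le> (inverse (real (Suc n)) + \<eta>) * norm x"
      using poly_op_diff_norm[OF L T, of "P _" f _ p \<eta>] Pl pe by (auto simp: I_def)
  qed
  obtain M where M: "\<forall>t\<in>I. \<bar>f t\<bar> \<le> M" using cont_bound[OF f] L unfolding I_def by auto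
  have Sadd: "S (x + y) = S x + S y" for x y
  proof -
    have "(\<lambda>n. poly_op (P n) T (x + y)) \<longlonglongrightarrow> S x + S y"
      using tendsto_add[OF lim[of x] lim[of y]] by (simp add: linear_add[OF bounded_linear.linear[OF blp]])
    then show ?thesis using lim[of "x+y"] LIMSEQ_unique by blast
  qed
  have Sscale: "S (r *\<^sub>R x) = r *\<^sub>R S x" for r x
  proof -
    have "(\<lambda>n. poly_op (P n) T (r *\<^sub>R x)) \<longlonglongrightarrow> r *\<^sub>R S x"
      using tendsto_scaleR[OF tendsto_const lim[of x]] by (simp add: linear_scale[OF bounded_linear.linear[OF blp]])
    then show ?thesis using lim[of "r *\<^sub>R x"] LIMSEQ_unique by blast
  qed
  have Snorm: "norm (S x) \<le> norm x * M" for x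
    using KE[of 0 M x] M by (simp add: mult.commute)
  have blS: "bounded_linear S" by (rule bounded_linear_intro[OF Sadd Sscale Snorm])
  have "fcalc f T = S"
    unfolding fcalc_def
  proof (rule the_equality)
    show "bounded_linear S \<and> (\<forall>\<epsilon>>0. \<exists>\<delta>>0. \<forall>p. (\<forall>t\<in>{0..onorm T}. \<bar>poly p t - f t\<bar> < \<delta>) \<longrightarrow>
        onorm (\<lambda>x. S x - poly_op p T x) \<le> \<epsilon>)"
    proof (intro conjI blS allI impI)
      fix \<epsilon> :: real assume "0 < \<epsilon>"
      show "\<exists>\<delta>>0. \<forall>p. (\<forall>t\<in>{0..onorm T}. \<bar>poly p t - f t\<bar> < \<delta>) \<longrightarrow> onorm (\<lambda>x. S x - poly_op p T x) \<le> \<epsilon>"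
      proof (intro exI conjI allI impI)
        fix p assume "\<forall>t\<in>{0..onorm T}. \<bar>poly p t - f t\<bar> < \<epsilon>"
        then have "\<forall>t\<in>I. \<bar>poly p t - f t\<bar> \<le> \<epsilon>" by (auto simp: I_def less_imp_le)
        then show "onorm (\<lambda>x. S x - poly_op p T x) \<le> \<epsilon>"
          using KE \<open>0 < \<epsilon>\<close> by (intro onorm_bound) auto
      qed fact
    qed
  next
    fix S' assume S': "bounded_linear S' \<and> (\<forall>\<epsilon>>0. \<exists>\<delta>>0. \<forall>p. (\<forall>t\<in>{0..onorm T}. \<bar>poly p t - f t\<bar> < \<delta>) \<longrightarrow>
        onorm (\<lambda>x. S' x - poly_op p T x) \<le> \<epsilon>)"
    show "S' = S"
    proof
      fix x
      have "norm (S' x - S x) \<le> 0"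
      proof (rule le_eps_zero)
        fix e :: real assume e: "0 < e"
        obtain \<delta> where d: "\<delta> > 0" "\<forall>p. (\<forall>t\<in>{0..onorm T}. \<bar>poly p t - f t\<bar> < \<delta>) \<longrightarrow>
            onorm (\<lambda>x. S' x - poly_op p T x) \<le> e"
          using S' e by blast
        obtain p where p: "\<forall>t\<in>{0..onorm T}. \<bar>poly p t - f t\<bar> < min \<delta> e"
          using weier_poly[OF f, of "min \<delta> e"] d e by auto
        have o1: "onorm (\<lambda>x. S' x - poly_op p T x) \<le> e" using d p by auto
        have "bounded_linear (\<lambda>x. S' x - poly_op p T x)"
          using S' blp by (intro bounded_linear_sub) auto
        from onorm[OF this, of x] o1 have n1: "norm (S' x - poly_op p T x) \<le> e * norm x"
          by (meson mult_right_mono norm_ge_zero order_trans)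
        have "\<forall>t\<in>I. \<bar>poly p t - f t\<bar> \<le> e" using p by (auto simp: I_def less_imp_le)
        then have n2: "norm (S x - poly_op p T x) \<le> e * norm x" by (rule KE)
        have "norm (S' x - S x) \<le> norm (S' x - poly_op p T x) + norm (S x - poly_op p T x)"
          using norm_triangle_ineq4[of "S' x - poly_op p T x" "S x - poly_op p T x"] by simp
        also have "\<dots> \<le> e * (2 * norm x)" using n1 n2 by simp
        finally show "norm (S' x - S x) \<le> e * (2 * norm x)" .
      qed simp
      then show "S' x = S x" by simp
    qed
  qed
  then show ?thesis using blS KE unfolding I_def by simp
qed


context
  fixes T :: "'a::{real_inner,complete_space} \<Rightarrow> 'a"
  assumes L: "0 < onorm T" and T: "posop T"
begin

lemma fc_bl: "continuous_on {0..onorm T} f \<Longrightarrow> bounded_linear (fcalc f T)"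
  using fcalc_main[OF L T] by blast

lemma fc_KE: "continuous_on {0..onorm T} f \<Longrightarrow> \<forall>t\<in>{0..onorm T}. \<bar>poly p t - f t\<bar> \<le> \<eta> \<Longrightarrow>
   norm (fcalc f T x - poly_op p T x) \<le> \<eta> * norm x"
  using fcalc_main[OF L T] by blast

lemma fc_norm: "continuous_on {0..onorm T} f \<Longrightarrow> \<forall>t\<in>{0..onorm T}. \<bar>f t\<bar> \<le> M \<Longrightarrow>
   norm (fcalc f T x) \<le> M * norm x"
  using fc_KE[of f 0 M x] by simp

lemma fc_cong:
  assumes "\<forall>t\<in>{0..onorm T}. f t = g t"
  shows "fcalc f T = fcalc g T"
proof -
  have "\<And>p \<delta>. (\<forall>t\<in>{0..onorm T}. \<bar>poly p t - f t\<bar> < \<delta>) = (\<forall>t\<in>{0..onorm T}. \<bar>poly p t - g t\<bar> < \<delta>)"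
    using assms by auto
  then show ?thesis unfolding fcalc_def by simp
qed

lemma fc_poly: "fcalc (\<lambda>t. poly p t) T x = poly_op p T x"
  using fc_KE[of "\<lambda>t. poly p t" p 0 x] by (simp add: continuous_on_poly continuous_on_id)

lemma fc_id: "fcalc (\<lambda>t. t) T x = T x"
proof -
  have "(\<lambda>t::real. t) = poly [:0,1:]" by (rule ext) simp
  then have "fcalc (\<lambda>t. t) T x = fcalc (poly [:0,1:]) T x" by simp
  also have "\<dots> = T x" using fc_poly[of "[:0,1:]" x] poly_op_X[OF bounded_linear.linear[OF posop_bl[OF T]], of x] by (rule trans)
  finally show ?thesis .
qed

lemma fc_const: "fcalc (\<lambda>t. c) T x = c *\<^sub>R x"
proof -
  have "(\<lambda>t::real. c) = poly [:c:]" by (rule ext) simp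
  then have "fcalc (\<lambda>t. c) T x = fcalc (poly [:c:]) T x" by simp
  also have "\<dots> = c *\<^sub>R x" using fc_poly[of "[:c:]" x] poly_op_const[of c T x] by (rule trans)
  finally show ?thesis .
qed

lemma fc_eqI:
  assumes h: "continuous_on {0..onorm T} h" and C: "0 \<le> C"
    and H: "\<And>\<epsilon>. \<epsilon> > 0 \<Longrightarrow> \<exists>p. (\<forall>t\<in>{0..onorm T}. \<bar>poly p t - h t\<bar> \<le> \<epsilon>) \<and> norm (y - poly_op p T x) \<le> \<epsilon> * C"
  shows "fcalc h T x = y"
proof -
  have "norm (fcalc h T x - y) \<le> 0"
  proof (rule le_eps_zero)
    fix e :: real assume "0 < e"
    then obtain p where p: "\<forall>t\<in>{0..onorm T}. \<bar>poly p t - h t\<bar> \<le> e" "norm (y - poly_op p T x) \<le> e * C"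
      using H by blast
    have "norm (fcalc h T x - y) \<le> norm (fcalc h T x - poly_op p T x) + norm (y - poly_op p T x)"
      using norm_triangle_ineq4[of "fcalc h T x - poly_op p T x" "y - poly_op p T x"] by simp
    also have "\<dots> \<le> e * norm x + e * C" using add_mono[OF fc_KE[OF h p(1), of x] p(2)] .
    finally show "norm (fcalc h T x - y) \<le> e * (norm x + C)" by (simp add: algebra_simps)
  qed (use C in simp)
  then show ?thesis by simp
qed

lemma weier_le:
  assumes "continuous_on {0..onorm T} f" "0 < e"
  obtains p where "\<forall>t\<in>{0..onorm T}. \<bar>poly p t - f t\<bar> \<le> e"
  using weier_poly[OF assms] less_imp_le by blast

lemma fc_add:
  assumes f: "continuous_on {0..onorm T} f" and g: "continuous_on {0..onorm T} g"
  shows "fcalc (\<lambda>t. f t + g t) T x = fcalc f T x + fcalc g T x"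
proof (rule fc_eqI)
  show "continuous_on {0..onorm T} (\<lambda>t. f t + g t)" using f g by (intro continuous_intros)
  fix e :: real assume e: "0 < e"
  obtain p where p: "\<forall>t\<in>{0..onorm T}. \<bar>poly p t - f t\<bar> \<le> e/2" using weier_le[OF f, of "e/2"] e by auto
  obtain q where q: "\<forall>t\<in>{0..onorm T}. \<bar>poly q t - g t\<bar> \<le> e/2" using weier_le[OF g, of "e/2"] e by auto
  show "\<exists>r. (\<forall>t\<in>{0..onorm T}. \<bar>poly r t - (f t + g t)\<bar> \<le> e) \<and>
      norm (fcalc f T x + fcalc g T x - poly_op r T x) \<le> e * norm x"
  proof (intro exI conjI)
    show "\<forall>t\<in>{0..onorm T}. \<bar>poly (p + q) t - (f t + g t)\<bar> \<le> e"
    proof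
      fix t assume "t \<in> {0..onorm T}"
      then have "\<bar>poly p t - f t\<bar> \<le> e/2" "\<bar>poly q t - g t\<bar> \<le> e/2" using p q by auto
      then show "\<bar>poly (p + q) t - (f t + g t)\<bar> \<le> e" by (simp only: poly_add)
    qed
    have "norm (fcalc f T x + fcalc g T x - poly_op (p + q) T x)
        \<le> norm (fcalc f T x - poly_op p T x) + norm (fcalc g T x - poly_op q T x)"
      using norm_triangle_ineq[of "fcalc f T x - poly_op p T x" "fcalc g T x - poly_op q T x"]
      by (simp add: poly_op_add algebra_simps)
    also have "\<dots> \<le> e/2 * norm x + e/2 * norm x" using fc_KE[OF f p] fc_KE[OF g q] by (intro add_mono)
    finally show "norm (fcalc f T x + fcalc g T x - poly_op (p + q) T x) \<le> e * norm x" by simp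
  qed
qed simp

lemma fc_scale:
  assumes f: "continuous_on {0..onorm T} f"
  shows "fcalc (\<lambda>t. c * f t) T x = c *\<^sub>R fcalc f T x"
proof (rule fc_eqI)
  show "continuous_on {0..onorm T} (\<lambda>t. c * f t)" using f by (intro continuous_intros)
  fix e :: real assume e: "0 < e"
  define d where "d = e / (\<bar>c\<bar> + 1)"
  have d: "0 < d" using e by (simp add: d_def add_nonneg_pos)
  have cd: "\<bar>c\<bar> * d \<le> e" using e by (simp add: d_def field_simps)
  obtain p where p: "\<forall>t\<in>{0..onorm T}. \<bar>poly p t - f t\<bar> \<le> d" using weier_le[OF f d] by auto
  show "\<exists>r. (\<forall>t\<in>{0..onorm T}. \<bar>poly r t - c * f t\<bar> \<le> e) \<and>
      norm (c *\<^sub>R fcalc f T x - poly_op r T x) \<le> e * norm x"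
  proof (intro exI conjI)
    show "\<forall>t\<in>{0..onorm T}. \<bar>poly (smult c p) t - c * f t\<bar> \<le> e"
    proof
      fix t assume "t \<in> {0..onorm T}"
      then have "\<bar>poly p t - f t\<bar> \<le> d" using p by auto
      then have "\<bar>c\<bar> * \<bar>poly p t - f t\<bar> \<le> \<bar>c\<bar> * d" by (intro mult_left_mono) auto
      then show "\<bar>poly (smult c p) t - c * f t\<bar> \<le> e" using cd by (simp add: abs_mult[symmetric] right_diff_distrib)
    qed
    have "norm (c *\<^sub>R fcalc f T x - poly_op (smult c p) T x) = \<bar>c\<bar> * norm (fcalc f T x - poly_op p T x)"
      by (simp add: poly_op_smult scaleR_diff_right[symmetric])
    also have "\<dots> \<le> \<bar>c\<bar> * (d * norm x)" using fc_KE[OF f p] by (intro mult_left_mono) auto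
    also have "\<dots> \<le> e * norm x" using cd by (simp add: mult.assoc[symmetric] mult_right_mono)
    finally show "norm (c *\<^sub>R fcalc f T x - poly_op (smult c p) T x) \<le> e * norm x" .
  qed
qed simp

lemma fc_diff:
  assumes f: "continuous_on {0..onorm T} f" and g: "continuous_on {0..onorm T} g"
  shows "fcalc (\<lambda>t. f t - g t) T x = fcalc f T x - fcalc g T x"
proof -
  have g': "continuous_on {0..onorm T} (\<lambda>t. (-1) * g t)" using g by (intro continuous_intros)
  have "fcalc (\<lambda>t. f t - g t) T x = fcalc (\<lambda>t. f t + (-1) * g t) T x" by simp
  also have "\<dots> = fcalc f T x + fcalc (\<lambda>t. (-1) * g t) T x" by (rule fc_add[OF f g'])
  also have "\<dots> = fcalc f T x - fcalc g T x" using fc_scale[OF g, of "-1" x] by simp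
  finally show ?thesis .
qed

lemma cont_bound0:
  fixes f :: "real \<Rightarrow> real"
  assumes "continuous_on {0..onorm T} f"
  obtains M where "0 \<le> M" "\<forall>t\<in>{0..onorm T}. \<bar>f t\<bar> \<le> M"
proof -
  obtain M where "\<forall>t\<in>{0..onorm T}. \<bar>f t\<bar> \<le> M" using cont_bound[OF assms] L by auto
  moreover have "0 \<le> M" using calculation L by (meson abs_ge_zero atLeastAtMost_iff less_imp_le order.refl order_trans)
  ultimately show ?thesis using that by blast
qed

lemma fc_mult:
  assumes f: "continuous_on {0..onorm T} f" and g: "continuous_on {0..onorm T} g"
  shows "fcalc (\<lambda>t. f t * g t) T x = fcalc f T (fcalc g T x)"
proof -
  obtain Mf where Mf: "0 \<le> Mf" "\<forall>t\<in>{0..onorm T}. \<bar>f t\<bar> \<le> Mf" using cont_bound0[OF f] by blast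
  obtain Mg where Mg: "0 \<le> Mg" "\<forall>t\<in>{0..onorm T}. \<bar>g t\<bar> \<le> Mg" using cont_bound0[OF g] by blast
  have lin: "linear T" using posop_bl[OF T] bounded_linear.linear by blast
  have blp: "bounded_linear (poly_op p T)" for p by (rule poly_op_bounded_linear[OF posop_bl[OF T]])
  show ?thesis
  proof (rule fc_eqI)
    show "continuous_on {0..onorm T} (\<lambda>t. f t * g t)" using f g by (intro continuous_intros)
    show "0 \<le> norm x" by simp
    fix e :: real assume e: "0 < e"
    define K where "K = Mf + Mg + 1"
    have K: "0 < K" using Mf Mg by (simp add: K_def)
    define d where "d = min 1 (e / K)"
    have d: "0 < d" "d \<le> 1" "d * K \<le> e" using e K by (auto simp: d_def min_def field_simps)
    obtain p where p: "\<forall>t\<in>{0..onorm T}. \<bar>poly p t - f t\<bar> \<le> d" using weier_le[OF f d(1)] by auto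
    obtain q where q: "\<forall>t\<in>{0..onorm T}. \<bar>poly q t - g t\<bar> \<le> d" using weier_le[OF g d(1)] by auto
    have pb: "\<forall>t\<in>{0..onorm T}. \<bar>poly p t\<bar> \<le> Mf + 1"
    proof
      fix t assume "t \<in> {0..onorm T}"
      then have "\<bar>poly p t - f t\<bar> \<le> d" "\<bar>f t\<bar> \<le> Mf" using p Mf by auto
      then show "\<bar>poly p t\<bar> \<le> Mf + 1" using d by linarith
    qed
    show "\<exists>r. (\<forall>t\<in>{0..onorm T}. \<bar>poly r t - f t * g t\<bar> \<le> e) \<and>
        norm (fcalc f T (fcalc g T x) - poly_op r T x) \<le> e * norm x"
    proof (intro exI conjI)
      show "\<forall>t\<in>{0..onorm T}. \<bar>poly (p * q) t - f t * g t\<bar> \<le> e"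
      proof
        fix t assume t: "t \<in> {0..onorm T}"
        have "poly (p * q) t - f t * g t = poly p t * (poly q t - g t) + g t * (poly p t - f t)"
          by (simp add: algebra_simps)
        then have "\<bar>poly (p * q) t - f t * g t\<bar> \<le> \<bar>poly p t\<bar> * \<bar>poly q t - g t\<bar> + \<bar>g t\<bar> * \<bar>poly p t - f t\<bar>"
          by (simp add: abs_mult[symmetric] abs_triangle_ineq)
        also have "\<dots> \<le> (Mf + 1) * d + Mg * d"
          using t pb p q Mg Mf by (intro add_mono mult_mono) auto
        also have "\<dots> = d * K" by (simp add: K_def algebra_simps)
        finally show "\<bar>poly (p * q) t - f t * g t\<bar> \<le> e" using d by linarith
      qed
      define Gx where "Gx = fcalc g T x"
      have "norm (fcalc f T Gx - poly_op (p * q) T x)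
          \<le> norm (fcalc f T Gx - poly_op p T Gx) + norm (poly_op p T (Gx - poly_op q T x))"
        using norm_triangle_ineq[of "fcalc f T Gx - poly_op p T Gx" "poly_op p T (Gx - poly_op q T x)"]
        by (simp add: poly_op_mult[OF lin] linear_diff[OF bounded_linear.linear[OF blp]])
      also have "\<dots> \<le> d * norm Gx + (Mf + 1) * norm (Gx - poly_op q T x)"
        using fc_KE[OF f p, of Gx] poly_op_norm_le[OF L T order.refl pb] by (intro add_mono) auto
      also have "\<dots> \<le> d * (Mg * norm x) + (Mf + 1) * (d * norm x)"
        using fc_norm[OF g Mg(2), of x] fc_KE[OF g q, of x] d Mf unfolding Gx_def
        by (intro add_mono mult_left_mono) auto
      also have "\<dots> = (d * K) * norm x" by (simp add: K_def algebra_simps)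
      also have "\<dots> \<le> e * norm x" using d by (intro mult_right_mono) auto
      finally show "norm (fcalc f T (fcalc g T x) - poly_op (p * q) T x) \<le> e * norm x"
        unfolding Gx_def .
    qed
  qed
qed

lemma fc_selfadj:
  assumes f: "continuous_on {0..onorm T} f"
  shows "inner (fcalc f T x) y = inner x (fcalc f T y)"
proof -
  have bl: "bounded_linear T" using posop_bl[OF T] .
  have sa: "\<forall>x y. inner (T x) y = inner x (T y)" using posop_sa[OF T] by blast
  have "\<bar>inner (fcalc f T x) y - inner x (fcalc f T y)\<bar> \<le> 0"
  proof (rule le_eps_zero)
    fix e :: real assume e: "0 < e"
    obtain p where p: "\<forall>t\<in>{0..onorm T}. \<bar>poly p t - f t\<bar> \<le> e" using weier_le[OF f e] by auto
    have "inner (fcalc f T x) y - inner x (fcalc f T y)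
        = inner (fcalc f T x - poly_op p T x) y - inner x (fcalc f T y - poly_op p T y)"
      using poly_op_selfadj[OF bl sa, of p x y] by (simp add: inner_diff_left inner_diff_right)
    then have "\<bar>inner (fcalc f T x) y - inner x (fcalc f T y)\<bar>
        \<le> \<bar>inner (fcalc f T x - poly_op p T x) y\<bar> + \<bar>inner x (fcalc f T y - poly_op p T y)\<bar>"
      by simp
    also have "\<dots> \<le> norm (fcalc f T x - poly_op p T x) * norm y + norm x * norm (fcalc f T y - poly_op p T y)"
      by (intro add_mono Cauchy_Schwarz_ineq2)
    also have "\<dots> \<le> (e * norm x) * norm y + norm x * (e * norm y)"
      using fc_KE[OF f p] by (intro add_mono mult_right_mono mult_left_mono) auto
    finally show "\<bar>inner (fcalc f T x) y - inner x (fcalc f T y)\<bar> \<le> e * (2 * norm x * norm y)"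
      by (simp add: algebra_simps)
  qed simp
  then show ?thesis by simp
qed

lemma fc_posop:
  assumes f: "continuous_on {0..onorm T} f" and fnn: "\<forall>t\<in>{0..onorm T}. 0 \<le> f t"
  shows "posop (fcalc f T)"
  unfolding posop_def
proof (intro conjI allI)
  show "bounded_linear (fcalc f T)" by (rule fc_bl[OF f])
  show "inner (fcalc f T x) y = inner x (fcalc f T y)" for x y by (rule fc_selfadj[OF f])
  fix x
  have s: "continuous_on {0..onorm T} (\<lambda>t. sqrt (f t))" using f by (intro continuous_intros)
  have "fcalc f T = fcalc (\<lambda>t. sqrt (f t) * sqrt (f t)) T" by (rule fc_cong) (use fnn in auto)
  then have "fcalc f T x = fcalc (\<lambda>t. sqrt (f t)) T (fcalc (\<lambda>t. sqrt (f t)) T x)"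
    using fc_mult[OF s s] by simp
  then have "inner (fcalc f T x) x = inner (fcalc (\<lambda>t. sqrt (f t)) T x) (fcalc (\<lambda>t. sqrt (f t)) T x)"
    using fc_selfadj[OF s] by simp
  then show "0 \<le> inner (fcalc f T x) x" by simp
qed

end


lemma fc_comp:
  fixes T G :: "'a::{real_inner,complete_space} \<Rightarrow> 'a"
  assumes LT: "0 < onorm T" and T: "posop T" and g: "continuous_on {0..onorm T} g"
    and G: "G = fcalc g T" and LG: "0 < onorm G" and PG: "posop G"
    and gmap: "\<forall>t\<in>{0..onorm T}. g t \<in> {0..onorm G}"
    and h: "continuous_on {0..onorm G} h"
  shows "fcalc h G x = fcalc (\<lambda>t. h (g t)) T x"
proof -
  have pg: "continuous_on {0..onorm T} (\<lambda>t. poly p (g t))" for p using g by (intro continuous_intros)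
  have linG: "linear G" using posop_bl[OF PG] bounded_linear.linear by blast
  have step1: "poly_op p G y = fcalc (\<lambda>t. poly p (g t)) T y" for p y
  proof (induction p arbitrary: y)
    case 0
    show ?case using fc_const[OF LT T, of 0 y] by simp
  next
    case (pCons a p)
    have "poly_op (pCons a p) G y = a *\<^sub>R y + G (poly_op p G y)" by (rule poly_op_pCons[OF linG])
    also have "\<dots> = fcalc (\<lambda>t. a) T y + fcalc g T (fcalc (\<lambda>t. poly p (g t)) T y)"
      using pCons.IH fc_const[OF LT T, of a y] G by simp
    also have "fcalc g T (fcalc (\<lambda>t. poly p (g t)) T y) = fcalc (\<lambda>t. g t * poly p (g t)) T y"
      by (rule fc_mult[OF LT T g pg, symmetric])
    also have "fcalc (\<lambda>t. a) T y + \<dots> = fcalc (\<lambda>t. a + g t * poly p (g t)) T y"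
      by (rule fc_add[OF LT T, symmetric]) (use g pg in \<open>auto intro!: continuous_intros\<close>)
    finally show ?case by simp
  qed
  have hg: "continuous_on {0..onorm T} (\<lambda>t. h (g t))"
  proof -
    have "g ` {0..onorm T} \<subseteq> {0..onorm G}" using gmap by blast
    then show ?thesis using continuous_on_compose2[OF h g] by blast
  qed
  have "norm (fcalc h G x - fcalc (\<lambda>t. h (g t)) T x) \<le> 0"
  proof (rule le_eps_zero)
    fix e :: real assume e: "0 < e"
    obtain p where p: "\<forall>t\<in>{0..onorm G}. \<bar>poly p t - h t\<bar> \<le> e" using weier_le[OF LG PG h e] by auto
    have n1: "norm (fcalc h G x - poly_op p G x) \<le> e * norm x" by (rule fc_KE[OF LG PG h p])
    have "fcalc (\<lambda>t. h (g t)) T x - poly_op p G x = fcalc (\<lambda>t. h (g t) - poly p (g t)) T x"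
      using step1 fc_diff[OF LT T hg pg] by simp
    moreover have "norm (fcalc (\<lambda>t. h (g t) - poly p (g t)) T x) \<le> e * norm x"
    proof (rule fc_norm[OF LT T])
      show "continuous_on {0..onorm T} (\<lambda>t. h (g t) - poly p (g t))" by (rule continuous_on_diff[OF hg pg])
      show "\<forall>t\<in>{0..onorm T}. \<bar>h (g t) - poly p (g t)\<bar> \<le> e"
        using gmap p by (auto simp: abs_minus_commute)
    qed
    ultimately have n2: "norm (fcalc (\<lambda>t. h (g t)) T x - poly_op p G x) \<le> e * norm x" by simp
    have "norm (fcalc h G x - fcalc (\<lambda>t. h (g t)) T x)
        \<le> norm (fcalc h G x - poly_op p G x) + norm (fcalc (\<lambda>t. h (g t)) T x - poly_op p G x)"
      using norm_triangle_ineq4[of "fcalc h G x - poly_op p G x" "fcalc (\<lambda>t. h (g t)) T x - poly_op p G x"]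
      by simp
    also have "\<dots> \<le> e * norm x + e * norm x" using n1 n2 by (rule add_mono)
    finally show "norm (fcalc h G x - fcalc (\<lambda>t. h (g t)) T x) \<le> e * (2 * norm x)" by simp
  qed simp
  then show ?thesis by simp
qed

lemma cont_powr0:
  assumes "0 < b"
  shows "continuous_on {0..a} (\<lambda>t::real. t powr b)"
  by (rule continuous_on_powr') (use assms in \<open>auto intro: continuous_intros\<close>)

context
  fixes T :: "'a::{real_inner,complete_space} \<Rightarrow> 'a"
  assumes L: "0 < onorm T" and T: "posop T"
begin

lemma S_mult:
  assumes "0 < b" "0 < c"
  shows "fcalc (\<lambda>t. t powr (b + c)) T x = fcalc (\<lambda>t. t powr b) T (fcalc (\<lambda>t. t powr c) T x)"
  using fc_mult[OF L T cont_powr0[OF assms(1)] cont_powr0[OF assms(2)]] by (simp add: powr_add)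

lemma S_one: "fcalc (\<lambda>t. t powr 1) T = T"
proof
  fix x
  have "fcalc (\<lambda>t. t powr 1) T = fcalc (\<lambda>t. t) T" by (rule fc_cong[OF L T]) auto
  then show "fcalc (\<lambda>t. t powr 1) T x = T x" using fc_id[OF L T] by simp
qed

lemma S_bl: "0 < b \<Longrightarrow> bounded_linear (fcalc (\<lambda>t. t powr b) T)"
  by (rule fc_bl[OF L T cont_powr0])

lemma N_le: "0 < b \<Longrightarrow> onorm (fcalc (\<lambda>t. t powr b) T) \<le> onorm T powr b"
proof (rule onorm_bound)
  assume b: "0 < b"
  show "0 \<le> onorm T powr b" by simp
  show "norm (fcalc (\<lambda>t. t powr b) T x) \<le> onorm T powr b * norm x" for x
    by (rule fc_norm[OF L T cont_powr0[OF b]]) (use b in \<open>auto intro: powr_mono2\<close>)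
qed

lemma N_sq:
  assumes b: "0 < b"
  shows "onorm (fcalc (\<lambda>t. t powr b) T) * onorm (fcalc (\<lambda>t. t powr b) T) \<le> onorm (fcalc (\<lambda>t. t powr (2 * b)) T)"
proof -
  define S where "S = fcalc (\<lambda>t. t powr b) T"
  define N2 where "N2 = onorm (fcalc (\<lambda>t. t powr (2 * b)) T)"
  have b2: "0 < 2 * b" using b by simp
  have N20: "0 \<le> N2" unfolding N2_def by (rule onorm_pos_le[OF S_bl[OF b2]])
  have "norm (S x) \<le> sqrt N2 * norm x" for x
  proof -
    have "norm (S x) * norm (S x) = inner (S x) (S x)" by (simp add: dot_square_norm power2_eq_square)
    also have "\<dots> = inner (S (S x)) x" unfolding S_def by (rule fc_selfadj[OF L T cont_powr0[OF b], symmetric])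
    also have "S (S x) = fcalc (\<lambda>t. t powr (2 * b)) T x" by (simp only: S_def S_mult[OF b b, symmetric] mult_2)
    also have "inner (fcalc (\<lambda>t. t powr (2 * b)) T x) x \<le> norm (fcalc (\<lambda>t. t powr (2 * b)) T x) * norm x"
      by (rule norm_cauchy_schwarz)
    also have "\<dots> \<le> (N2 * norm x) * norm x"
      using onorm[OF S_bl[OF b2], of x] unfolding N2_def by (rule mult_right_mono) simp
    finally have a: "norm (S x) * norm (S x) \<le> N2 * norm x * norm x" .
    have "(sqrt N2 * norm x)^2 = N2 * norm x * norm x"
      unfolding power_mult_distrib real_sqrt_pow2[OF N20] by (simp only: power2_eq_square mult.assoc)
    with a have "(norm (S x))^2 \<le> (sqrt N2 * norm x)^2" by (simp only: power2_eq_square)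
    then show ?thesis by (rule power2_le_imp_le) (use N20 in simp)
  qed
  then have "onorm S \<le> sqrt N2" by (intro onorm_bound) (use N20 in auto)
  moreover have "0 \<le> onorm S" unfolding S_def using S_bl[OF b] by (rule onorm_pos_le)
  ultimately have "onorm S * onorm S \<le> sqrt N2 * sqrt N2" by (intro mult_mono) (use N20 in auto)
  then show ?thesis using N20 by (simp add: S_def N2_def)
qed

lemma N_mult:
  assumes "0 < b" "0 < c"
  shows "onorm (fcalc (\<lambda>t. t powr (b + c)) T) \<le> onorm (fcalc (\<lambda>t. t powr b) T) * onorm (fcalc (\<lambda>t. t powr c) T)"
proof (rule onorm_bound)
  show "0 \<le> onorm (fcalc (\<lambda>t. t powr b) T) * onorm (fcalc (\<lambda>t. t powr c) T)"
    using S_bl assms by (intro mult_nonneg_nonneg onorm_pos_le) auto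
  fix x
  have "norm (fcalc (\<lambda>t. t powr (b + c)) T x) = norm (fcalc (\<lambda>t. t powr b) T (fcalc (\<lambda>t. t powr c) T x))"
    by (simp add: S_mult[OF assms])
  also have "\<dots> \<le> onorm (fcalc (\<lambda>t. t powr b) T) * norm (fcalc (\<lambda>t. t powr c) T x)"
    by (rule onorm[OF S_bl[OF assms(1)]])
  also have "\<dots> \<le> onorm (fcalc (\<lambda>t. t powr b) T) * (onorm (fcalc (\<lambda>t. t powr c) T) * norm x)"
    by (intro mult_left_mono onorm[OF S_bl[OF assms(2)]] onorm_pos_le[OF S_bl[OF assms(1)]])
  finally show "norm (fcalc (\<lambda>t. t powr (b + c)) T x)
      \<le> onorm (fcalc (\<lambda>t. t powr b) T) * onorm (fcalc (\<lambda>t. t powr c) T) * norm x"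
    by (simp add: mult.assoc)
qed

lemma N_pow2: "onorm T powr (2 ^ k) \<le> onorm (fcalc (\<lambda>t. t powr (2 ^ k)) T)"
proof (induction k)
  case 0
  show ?case unfolding power_0 S_one using L by simp
next
  case (Suc k)
  have e: "(2::real) ^ Suc k = 2 ^ k + 2 ^ k" by simp
  have "onorm T powr (2 ^ Suc k) = onorm T powr (2 ^ k) * onorm T powr (2 ^ k)"
    unfolding e by (rule powr_add)
  also have "\<dots> \<le> onorm (fcalc (\<lambda>t. t powr (2 ^ k)) T) * onorm (fcalc (\<lambda>t. t powr (2 ^ k)) T)"
  proof -
    have "0 < (2::real) ^ k" by simp
    from onorm_pos_le[OF S_bl[OF this]] Suc.IH show ?thesis by (intro mult_mono) auto
  qed
  also have "\<dots> \<le> onorm (fcalc (\<lambda>t. t powr (2 * 2 ^ k)) T)" by (rule N_sq) simp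
  finally show ?case by (simp only: power_Suc)
qed

lemma N_lower:
  assumes s: "0 < s"
  shows "onorm T powr s \<le> onorm (fcalc (\<lambda>t. t powr s) T)"
proof -
  obtain k where k: "s < 2 ^ k" using real_arch_pow[of 2 s] by auto
  define c where "c = 2 ^ k - s"
  have c: "0 < c" using k by (simp add: c_def)
  have "onorm T powr s * onorm T powr c = onorm T powr (2 ^ k)" by (simp add: powr_add[symmetric] c_def)
  also have "\<dots> \<le> onorm (fcalc (\<lambda>t. t powr (2 ^ k)) T)" by (rule N_pow2)
  also have "(2::real) ^ k = s + c" by (simp add: c_def)
  also have "onorm (fcalc (\<lambda>t. t powr (s + c)) T) \<le> onorm (fcalc (\<lambda>t. t powr s) T) * onorm (fcalc (\<lambda>t. t powr c) T)"
    by (rule N_mult[OF s c])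
  also have "\<dots> \<le> onorm (fcalc (\<lambda>t. t powr s) T) * onorm T powr c"
    using N_le[OF c] S_bl[OF s] by (intro mult_left_mono onorm_pos_le) auto
  finally have "onorm T powr s * onorm T powr c \<le> onorm (fcalc (\<lambda>t. t powr s) T) * onorm T powr c" .
  moreover have "0 < onorm T powr c" using L by simp
  ultimately show ?thesis by (rule mult_right_le_imp_le)
qed

end


lemma phi_nonneg: "0 \<le> phi c \<kappa> t"
  by (simp add: phi_def)

lemma phi_pos_eq: "0 < t \<Longrightarrow> phi c \<kappa> t = (- ln (c * t)) powr (- \<kappa>)"
  by (simp add: phi_def)

lemma phi_cont:
  assumes c: "0 < c" and k: "0 < \<kappa>" and L: "0 < L" and cL: "c * L < 1"
  shows "continuous_on {0..L} (phi c \<kappa>)"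
  unfolding continuous_on_def
proof
  fix x assume x: "x \<in> {0..L}"
  show "(phi c \<kappa> \<longlongrightarrow> phi c \<kappa> x) (at x within {0..L})"
  proof (cases "x = 0")
    case True
    have "filterlim (\<lambda>t::real. - ln t) at_top (at_right 0)"
      using filterlim_uminus_at_bot[of ln "at_right 0", THEN iffD1, OF ln_at_0] .
    then have "filterlim (\<lambda>t. - ln c + - ln t) at_top (at_right 0)"
      by (rule filterlim_tendsto_add_at_top[OF tendsto_const])
    moreover have "\<forall>\<^sub>F t in at_right 0. - ln c + - ln t = - ln (c * t)"
      using eventually_at_right_real[OF zero_less_one]
    proof eventually_elim
      case (elim t)
      then show ?case using c by (simp add: ln_mult)
    qed
    ultimately have "filterlim (\<lambda>t. - ln (c * t)) at_top (at_right 0)"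
      using filterlim_cong[OF refl refl, of "\<lambda>t. - ln c + - ln t" "\<lambda>t. - ln (c * t)" "at_right (0::real)" at_top]
      by blast
    then have "((\<lambda>t. (- ln (c * t)) powr (- \<kappa>)) \<longlongrightarrow> 0) (at_right 0)"
      by (rule tendsto_neg_powr[rotated]) (use k in simp)
    moreover have "\<forall>\<^sub>F t in at_right 0. (- ln (c * t)) powr (- \<kappa>) = phi c \<kappa> t"
      using eventually_at_right_real[OF zero_less_one]
    proof eventually_elim
      case (elim t)
      then show ?case by (simp add: phi_def)
    qed
    ultimately have "(phi c \<kappa> \<longlongrightarrow> 0) (at_right 0)"
      by (rule Lim_transform_eventually)
    then show ?thesis using True L by (simp add: at_within_Icc_at_right phi_def)
  next
    case False
    then have x0: "0 < x" using x by simp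
    have "isCont (\<lambda>t. (- ln (c * t)) powr (- \<kappa>)) x"
    proof -
      have "c * x < 1" using cL x c by (smt (verit) atLeastAtMost_iff mult_left_mono)
      then have "0 < - ln (c * x)" using c x0 by simp
      then show ?thesis using c x0 by (intro continuous_intros) auto
    qed
    moreover have "\<forall>\<^sub>F t in nhds x. phi c \<kappa> t = (- ln (c * t)) powr (- \<kappa>)"
      using eventually_nhds_in_open[of "{0<..}" x] x0 by (auto elim!: eventually_mono simp: phi_def)
    ultimately have "isCont (phi c \<kappa>) x" using isCont_cong[of "phi c \<kappa>" "\<lambda>t. (- ln (c * t)) powr (- \<kappa>)" x] by blast
    from continuous_at_imp_continuous_at_within[OF this, of "{0..L}"] show ?thesis by (simp only: continuous_within)
  qed
qed


lemma exp_bound: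
  fixes A \<beta> \<kappa> :: real
  assumes A: "0 < A" and b: "0 < \<beta>" and k: "0 < \<kappa>"
  shows "exp (- (\<beta> * A / 2)) \<le> (2 * \<kappa> / \<beta>) powr \<kappa> * A powr (- \<kappa>)"
proof -
  define z where "z = \<beta> * A / (2 * \<kappa>)"
  have z: "0 < z" using A b k by (simp add: z_def)
  have Az: "A = (2 * \<kappa> / \<beta>) * z" using b k by (simp add: z_def field_simps)
  have "z \<le> exp z" using exp_ge_add_one_self[of z] by linarith
  moreover have "0 \<le> 2 * \<kappa> / \<beta>" using b k by simp
  ultimately have "(2 * \<kappa> / \<beta>) * z \<le> (2 * \<kappa> / \<beta>) * exp z" by (rule mult_left_mono)
  then have "A \<le> (2 * \<kappa> / \<beta>) * exp z" using Az by simp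
  then have "A powr \<kappa> \<le> ((2 * \<kappa> / \<beta>) * exp z) powr \<kappa>" using A k by (intro powr_mono2) auto
  also have "\<dots> = (2 * \<kappa> / \<beta>) powr \<kappa> * exp z powr \<kappa>" by (rule powr_mult)
  also have "exp z powr \<kappa> = exp (\<beta> * A / 2)" using k by (simp add: exp_powr_real z_def field_simps)
  finally have a: "A powr \<kappa> \<le> (2 * \<kappa> / \<beta>) powr \<kappa> * exp (\<beta> * A / 2)" .
  have pA: "0 < A powr \<kappa>" using A by simp
  have "exp (- (\<beta> * A / 2)) = 1 / exp (\<beta> * A / 2)" by (simp add: exp_minus field_simps)
  also have "\<dots> \<le> (2 * \<kappa> / \<beta>) powr \<kappa> / A powr \<kappa>"
    using a pA by (simp add: field_simps)
  also have "\<dots> = (2 * \<kappa> / \<beta>) powr \<kappa> * A powr (- \<kappa>)" by (simp add: powr_minus divide_inverse)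
  finally show ?thesis .
qed

lemma RL:
  fixes \<theta> c \<kappa> L :: real
  assumes th0: "0 \<le> \<theta>" and th1: "\<theta> < 1" and c: "0 < c" and k: "0 < \<kappa>" and L: "0 < L" and cL: "c * L < 1"
  shows "\<exists>C>0. \<forall>\<alpha>\<in>{0<..L}. \<forall>u\<in>{0..L}.
     u powr \<theta> * \<alpha> powr (1 - \<theta>) * phi c \<kappa> u / (u + \<alpha>) \<le> C * phi c \<kappa> \<alpha>"
proof -
  define \<beta> where "\<beta> = 1 - \<theta>"
  have b: "0 < \<beta>" using th1 by (simp add: \<beta>_def)
  define d0 where "d0 = - ln (c * L)"
  have d0: "0 < d0" using cL c L by (simp add: d0_def)
  define K where "K = (2 * \<kappa> / \<beta>) powr \<kappa> * d0 powr (- \<kappa>)"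
  have K: "0 \<le> K" by (simp add: K_def)
  define C where "C = 1 + 2 powr \<kappa> + K"
  have C: "0 < C" using K by (simp add: C_def add_pos_nonneg)
  have main: "u powr \<theta> * \<alpha> powr \<beta> * phi c \<kappa> u / (u + \<alpha>) \<le> C * phi c \<kappa> \<alpha>"
    if al: "0 < \<alpha>" "\<alpha> \<le> L" and u: "0 \<le> u" "u \<le> L" for \<alpha> u
  proof (cases "u = 0")
    case True
    then show ?thesis using C by (simp add: phi_def)
  next
    case False
    then have u0: "0 < u" using u by simp
    define A where "A = - ln (c * \<alpha>)"
    define B where "B = - ln (c * u)"
    have "c * \<alpha> \<le> c * L" using al c by simp
    then have "ln (c * \<alpha>) \<le> ln (c * L)" using c al by simp
    then have Ad: "d0 \<le> A" by (simp add: A_def d0_def)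
    have "c * u \<le> c * L" using u c by simp
    then have "ln (c * u) \<le> ln (c * L)" using c u0 by simp
    then have Bd: "d0 \<le> B" by (simp add: B_def d0_def)
    have A0: "0 < A" and B0: "0 < B" using Ad Bd d0 by auto
    have pa: "phi c \<kappa> \<alpha> = A powr (- \<kappa>)" using al by (simp add: phi_def A_def)
    have pu: "phi c \<kappa> u = B powr (- \<kappa>)" using u0 by (simp add: phi_def B_def)
    define R where "R = u powr \<theta> * \<alpha> powr \<beta> / (u + \<alpha>)"
    have R0: "0 \<le> R" using al u by (simp add: R_def)
    have lhs: "u powr \<theta> * \<alpha> powr \<beta> * phi c \<kappa> u / (u + \<alpha>) = R * phi c \<kappa> u" by (simp add: R_def)
    have phiu0: "0 \<le> phi c \<kappa> u" by (rule phi_nonneg)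
    have phia0: "0 \<le> phi c \<kappa> \<alpha>" by (rule phi_nonneg)
    have tb: "\<theta> + \<beta> = 1" by (simp add: \<beta>_def)
    show ?thesis
    proof (cases "u \<le> \<alpha>")
      case True
      have "u powr \<theta> * \<alpha> powr \<beta> \<le> \<alpha> powr \<theta> * \<alpha> powr \<beta>"
        using True u0 th0 by (intro mult_right_mono powr_mono2) auto
      also have "\<dots> = \<alpha>" using al by (simp add: powr_add[symmetric] tb)
      also have "\<dots> \<le> u + \<alpha>" using u by simp
      finally have R1: "R \<le> 1" using al u by (simp add: R_def divide_le_eq_1)
      have "c * u \<le> c * \<alpha>" using True c by simp
      then have "ln (c * u) \<le> ln (c * \<alpha>)" using c u0 by simp
      then have "A \<le> B" by (simp add: A_def B_def)
      then have "B powr (- \<kappa>) \<le> A powr (- \<kappa>)" using A0 k by (intro powr_mono2') auto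
      then have "phi c \<kappa> u \<le> phi c \<kappa> \<alpha>" using pa pu by simp
      then have "R * phi c \<kappa> u \<le> 1 * phi c \<kappa> \<alpha>" using R1 R0 phiu0 by (intro mult_mono) auto
      also have "\<dots> \<le> C * phi c \<kappa> \<alpha>" using phia0 K by (intro mult_right_mono) (auto simp: C_def)
      finally show ?thesis using lhs by simp
    next
      case False
      then have ua: "\<alpha> < u" by simp
      have "u powr \<theta> * \<alpha> powr \<beta> \<le> u powr \<theta> * u powr \<beta>"
        using ua al b by (intro mult_left_mono powr_mono2) auto
      also have "\<dots> = u" using u0 by (simp add: powr_add[symmetric] tb)
      finally have uu: "u powr \<theta> * \<alpha> powr \<beta> \<le> u" .
      then have R1: "R \<le> 1" using al u by (simp add: R_def divide_le_eq_1)
      have "R \<le> u powr \<theta> * \<alpha> powr \<beta> / u"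
        unfolding R_def using al u0 by (intro divide_left_mono) auto
      also have "\<dots> = \<alpha> powr \<beta> * (u powr \<theta> / u powr 1)" using u0 by simp
      also have "u powr \<theta> / u powr 1 = u powr (- \<beta>)" unfolding powr_diff[symmetric] by (simp add: \<beta>_def)
      also have "\<alpha> powr \<beta> * u powr (- \<beta>) = (\<alpha> / u) powr \<beta>" by (subst powr_divide) (simp add: powr_minus divide_inverse)
      also have "\<dots> = exp (\<beta> * ln (\<alpha> / u))" using al u0 by (simp add: powr_def)
      also have "ln (\<alpha> / u) = - (A - B)" using al u0 c by (simp add: A_def B_def ln_div ln_mult)
      finally have "R \<le> exp (\<beta> * (- (A - B)))" .
      then have Rexp: "R \<le> exp (- (\<beta> * (A - B)))" by (simp only: mult_minus_right)
      show ?thesis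
      proof (cases "A \<le> 2 * B")
        case True
        have "A / 2 \<le> B" using True by simp
        then have "B powr (- \<kappa>) \<le> (A / 2) powr (- \<kappa>)" using A0 k by (intro powr_mono2') auto
        also have "(A / 2) powr (- \<kappa>) = 2 powr \<kappa> * A powr (- \<kappa>)"
          unfolding powr_divide powr_minus[of 2] by (simp add: divide_inverse mult.commute)
        finally have "phi c \<kappa> u \<le> 2 powr \<kappa> * phi c \<kappa> \<alpha>" using pa pu by simp
        then have "R * phi c \<kappa> u \<le> 1 * (2 powr \<kappa> * phi c \<kappa> \<alpha>)" using R1 R0 phiu0 by (intro mult_mono) auto
        also have "\<dots> \<le> C * phi c \<kappa> \<alpha>"
        proof -
          have "2 powr \<kappa> \<le> C" using K by (simp add: C_def)
          from mult_right_mono[OF this phia0] show ?thesis by simp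
        qed
        finally show ?thesis using lhs by simp
      next
        case False
        then have "A / 2 \<le> A - B" by simp
        then have "\<beta> * (A / 2) \<le> \<beta> * (A - B)" using b by (intro mult_left_mono) auto
        then have "\<beta> * A / 2 \<le> \<beta> * (A - B)" by simp
        then have "exp (- (\<beta> * (A - B))) \<le> exp (- (\<beta> * A / 2))" by simp
        also have "\<dots> \<le> (2 * \<kappa> / \<beta>) powr \<kappa> * A powr (- \<kappa>)" by (rule exp_bound[OF A0 b k])
        finally have R2: "R \<le> (2 * \<kappa> / \<beta>) powr \<kappa> * A powr (- \<kappa>)" using Rexp by linarith
        have "B powr (- \<kappa>) \<le> d0 powr (- \<kappa>)" using Bd d0 k by (intro powr_mono2') auto
        then have pu2: "phi c \<kappa> u \<le> d0 powr (- \<kappa>)" using pu by simp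
        have "R * phi c \<kappa> u \<le> ((2 * \<kappa> / \<beta>) powr \<kappa> * A powr (- \<kappa>)) * d0 powr (- \<kappa>)"
          using R2 pu2 R0 phiu0 by (intro mult_mono) auto
        also have "\<dots> = K * phi c \<kappa> \<alpha>" using pa by (simp add: K_def)
        also have "\<dots> \<le> C * phi c \<kappa> \<alpha>" using phia0 by (intro mult_right_mono) (auto simp: C_def)
        finally show ?thesis using lhs by simp
      qed
    qed
  qed
  show ?thesis using C main by (auto simp: \<beta>_def)
qed


lemma resolv_eq:
  fixes G :: "'a::{real_inner,complete_space} \<Rightarrow> 'a"
  assumes LG: "0 < onorm G" and PG: "posop G" and al: "0 < \<alpha>"
  shows "resolv G \<alpha> = fcalc (\<lambda>u. 1 / (u + \<alpha>)) G"
proof -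
  define R where "R = fcalc (\<lambda>u. 1 / (u + \<alpha>)) G"
  have cR: "continuous_on {0..onorm G} (\<lambda>u. 1 / (u + \<alpha>))"
    using al by (intro continuous_intros) auto
  have cid: "continuous_on {0..onorm G} (\<lambda>u::real. u)" by (rule continuous_on_id)
  have cc: "continuous_on {0..onorm G} (\<lambda>u::real. k)" for k by (rule continuous_on_const)
  have Gid: "G x = fcalc (\<lambda>u. u) G x" for x using fc_id[OF LG PG] by simp
  have P1: "R (G x + \<alpha> *\<^sub>R x) = x" for x
  proof -
    have "G x + \<alpha> *\<^sub>R x = fcalc (\<lambda>u. u + \<alpha>) G x"
      using fc_add[OF LG PG cid cc, where x=x] fc_id[OF LG PG] fc_const[OF LG PG] by simp
    then have "R (G x + \<alpha> *\<^sub>R x) = fcalc (\<lambda>u. 1 / (u + \<alpha>) * (u + \<alpha>)) G x"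
      unfolding R_def using fc_mult[OF LG PG cR, where g="\<lambda>u. u + \<alpha>" and x=x] by (simp add: continuous_on_add[OF cid cc])
    also have "fcalc (\<lambda>u. 1 / (u + \<alpha>) * (u + \<alpha>)) G = fcalc (\<lambda>u. 1) G"
      by (rule fc_cong[OF LG PG]) (use al in auto)
    finally show ?thesis using fc_const[OF LG PG, where c=1 and x=x] by simp
  qed
  have P2: "G (R x) + \<alpha> *\<^sub>R R x = x" for x
  proof -
    have "G (R x) = fcalc (\<lambda>u. u * (1 / (u + \<alpha>))) G x"
      unfolding R_def using Gid fc_mult[OF LG PG cid cR, where x=x] by simp
    moreover have "\<alpha> *\<^sub>R R x = fcalc (\<lambda>u. \<alpha> * (1 / (u + \<alpha>))) G x"
      unfolding R_def using fc_scale[OF LG PG cR, where c=\<alpha> and x=x] by simp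
    ultimately have "G (R x) + \<alpha> *\<^sub>R R x = fcalc (\<lambda>u. u * (1 / (u + \<alpha>)) + \<alpha> * (1 / (u + \<alpha>))) G x"
      using fc_add[OF LG PG, where f="\<lambda>u. u * (1 / (u + \<alpha>))" and g="\<lambda>u. \<alpha> * (1 / (u + \<alpha>))" and x=x]
        continuous_on_mult[OF cid cR] continuous_on_mult[OF cc cR] by simp
    also have "fcalc (\<lambda>u. u * (1 / (u + \<alpha>)) + \<alpha> * (1 / (u + \<alpha>))) G = fcalc (\<lambda>u. 1) G"
    proof (rule fc_cong[OF LG PG], intro ballI)
      fix u assume "u \<in> {0..onorm G}"
      then have "u + \<alpha> \<noteq> 0" using al by auto
      then show "u * (1 / (u + \<alpha>)) + \<alpha> * (1 / (u + \<alpha>)) = 1"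
        unfolding distrib_right[symmetric] by simp
    qed
    finally show ?thesis using fc_const[OF LG PG, where c=1 and x=x] by simp
  qed
  have blR: "bounded_linear R" unfolding R_def by (rule fc_bl[OF LG PG cR])
  show ?thesis
    unfolding resolv_def R_def[symmetric]
  proof (rule the_equality)
    show "bounded_linear R \<and> (\<forall>x. R (G x + \<alpha> *\<^sub>R x) = x) \<and> (\<forall>x. G (R x) + \<alpha> *\<^sub>R R x = x)"
      using blR P1 P2 by blast
  next
    fix R' assume R': "bounded_linear R' \<and> (\<forall>x. R' (G x + \<alpha> *\<^sub>R x) = x) \<and> (\<forall>x. G (R' x) + \<alpha> *\<^sub>R R' x = x)"
    show "R' = R"
    proof
      fix y
      have "R' y = R' (G (R y) + \<alpha> *\<^sub>R R y)" using P2 by simp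
      also have "\<dots> = R y" using R' by blast
      finally show "R' y = R y" .
    qed
  qed
qed


theorem lemma3p3:
  fixes B Binv :: "'a::{real_inner,complete_space} \<Rightarrow> 'a" and D :: "'a set"
    and m a \<kappa> c \<rho> :: real and ubar udag w :: 'a
  assumes B_sa: "selfadjoint_unbounded D B"
    and B_pos: "\<forall>u\<in>D. inner (B u) u \<ge> 0"
    and m_pos: "m > 0" and B_coercive: "\<forall>u\<in>D. norm (B u) \<ge> m * norm u"
    and Binv_bl: "bounded_linear Binv"
    and Binv_right: "\<forall>x. Binv x \<in> D \<and> B (Binv x) = x"
    and Binv_left: "\<forall>u\<in>D. Binv (B u) = u"
    and a_pos: "a > 0" and \<kappa>_pos: "\<kappa> > 0"
    and c_pos: "c > 0" and c_lt: "c < 1 / onorm (neg_pow Binv (2*a+2))"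
    and source: "udag - ubar = fcalc (phi c \<kappa>) (neg_pow Binv (2*a+2)) w"
    and w_le: "norm w \<le> \<rho>" and \<rho>_pos: "\<rho> > 0"
  shows "\<exists>C1 C2 C3 \<alpha>0. C1 > 0 \<and> C2 > 0 \<and> C3 > 0 \<and> 0 < \<alpha>0 \<and> \<alpha>0 \<le> onorm (neg_pow Binv (2*a+2)) \<and>
    (\<forall>\<alpha>\<in>{0<..\<alpha>0}.
       norm (uhat (neg_pow Binv (2*a+2)) ubar udag \<alpha> - udag) \<le> C1 * phi c \<kappa> \<alpha>
     \<and> norm (neg_pow Binv a (uhat (neg_pow Binv (2*a+2)) ubar udag \<alpha> - udag))
         \<le> C2 * \<alpha> powr (1 / ((2*a+2)/a)) * phi c \<kappa> \<alpha>
     \<and> uhat (neg_pow Binv (2*a+2)) ubar udag \<alpha> - ubar \<in> D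
     \<and> norm (B (uhat (neg_pow Binv (2*a+2)) ubar udag \<alpha> - ubar))
         \<le> C3 * \<alpha> powr (- (1 / (((2*a+2)/a) * a))) * phi c \<kappa> \<alpha>)"
proof -
  define s where "s = 2 * a + 2"
  have s0: "0 < s" and s2: "2 < s" using a_pos by (auto simp: s_def)
  have sa: "\<forall>u\<in>D. \<forall>v\<in>D. inner (B u) v = inner u (B v)"
    using B_sa by (simp add: selfadjoint_unbounded_def)
  have PT: "posop Binv"
    unfolding posop_def
  proof (intro conjI allI Binv_bl)
    fix x y
    have "inner (B (Binv x)) (Binv y) = inner (Binv x) (B (Binv y))" using sa Binv_right by blast
    then show "inner (Binv x) y = inner x (Binv y)" using Binv_right by (simp add: inner_commute)
  next
    fix x
    have "0 \<le> inner (B (Binv x)) (Binv x)" using B_pos Binv_right by blast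
    then show "0 \<le> inner (Binv x) x" using Binv_right by (simp add: inner_commute)
  qed
  have LT: "0 < onorm Binv"
  proof (subst onorm_pos_lt[OF Binv_bl], rule notI)
    assume z: "\<forall>x. Binv x = 0"
    have all0: "x = 0" for x :: 'a
    proof -
      have "x = B (Binv x)" using Binv_right by simp
      also have "\<dots> = B 0" using z by simp
      also have "\<dots> = B (Binv 0)" using z by simp
      also have "\<dots> = 0" using Binv_right by simp
      finally show ?thesis .
    qed
    have "\<exists>K. \<forall>u\<in>D. norm (B u) \<le> K * norm u"
      by (rule exI[of _ 0]) (simp add: all0[of "B _"])
    then show False using B_sa by (simp add: selfadjoint_unbounded_def)
  qed
  define G where "G = neg_pow Binv s"
  have Gdef: "G = fcalc (\<lambda>t. t powr s) Binv" by (simp add: G_def neg_pow_def)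
  have cg: "continuous_on {0..onorm Binv} (\<lambda>t. t powr s)" by (rule cont_powr0[OF s0])
  have PG: "posop G" unfolding Gdef by (rule fc_posop[OF LT PT cg]) simp
  have lowG: "onorm Binv powr s \<le> onorm G" unfolding Gdef by (rule N_lower[OF LT PT s0])
  have "0 < onorm Binv powr s" using LT by simp
  then have LG: "0 < onorm G" using lowG by linarith
  have cLG: "c * onorm G < 1" using c_lt LG by (simp add: G_def s_def less_divide_eq)
  have gmap: "\<forall>t\<in>{0..onorm Binv}. t powr s \<in> {0..onorm G}"
  proof
    fix t assume "t \<in> {0..onorm Binv}"
    then have "t powr s \<le> onorm Binv powr s" using s0 by (intro powr_mono2) auto
    then show "t powr s \<in> {0..onorm G}" using lowG by simp
  qed
  have transfer: "fcalc (\<lambda>t. t powr b) Binv x = fcalc (\<lambda>u. u powr (b / s)) G x" if b: "0 < b" for b x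
  proof -
    have "fcalc (\<lambda>u. u powr (b / s)) G x = fcalc (\<lambda>t. (t powr s) powr (b / s)) Binv x"
      by (rule fc_comp[OF LT PT cg Gdef LG PG gmap cont_powr0]) (use b s0 in simp)
    also have "(\<lambda>t. (t powr s) powr (b / s)) = (\<lambda>t. t powr b)" using s0 by (simp add: powr_powr)
    finally show ?thesis by simp
  qed
  have Tx: "Binv x = fcalc (\<lambda>u. u powr (1 / s)) G x" for x
    using transfer[of 1 x] S_one[OF LT PT] by simp
  have negA: "neg_pow Binv a y = fcalc (\<lambda>u. u powr (a / s)) G y" for y
    using transfer[OF a_pos, of y] by (simp add: neg_pow_def)
  have cphi: "continuous_on {0..onorm G} (phi c \<kappa>)" by (rule phi_cont[OF c_pos \<kappa>_pos LG cLG])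
  have source': "udag - ubar = fcalc (phi c \<kappa>) G w" using source by (simp add: G_def s_def)
  obtain C0 where C0: "C0 > 0" "\<forall>\<alpha>\<in>{0<..onorm G}. \<forall>u\<in>{0..onorm G}.
     u powr 0 * \<alpha> powr (1 - 0) * phi c \<kappa> u / (u + \<alpha>) \<le> C0 * phi c \<kappa> \<alpha>"
    using RL[of 0 c \<kappa> "onorm G"] c_pos \<kappa>_pos LG cLG by auto
  have th2: "0 \<le> a / s" "a / s < 1" using a_pos s0 by (auto simp: s_def)
  obtain C2' where C2': "C2' > 0" "\<forall>\<alpha>\<in>{0<..onorm G}. \<forall>u\<in>{0..onorm G}.
     u powr (a / s) * \<alpha> powr (1 - a / s) * phi c \<kappa> u / (u + \<alpha>) \<le> C2' * phi c \<kappa> \<alpha>"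
    using RL[OF th2 c_pos \<kappa>_pos LG cLG] by auto
  have th3: "0 \<le> 1 - 1 / s" "1 - 1 / s < 1" using s2 s0 by (auto simp: field_simps)
  obtain C3' where C3': "C3' > 0" "\<forall>\<alpha>\<in>{0<..onorm G}. \<forall>u\<in>{0..onorm G}.
     u powr (1 - 1 / s) * \<alpha> powr (1 - (1 - 1 / s)) * phi c \<kappa> u / (u + \<alpha>) \<le> C3' * phi c \<kappa> \<alpha>"
    using RL[OF th3 c_pos \<kappa>_pos LG cLG] by auto
  have main: "norm (uhat G ubar udag \<alpha> - udag) \<le> (C0 * \<rho>) * phi c \<kappa> \<alpha>
     \<and> norm (neg_pow Binv a (uhat G ubar udag \<alpha> - udag)) \<le> (C2' * \<rho>) * \<alpha> powr (a / s) * phi c \<kappa> \<alpha>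
     \<and> uhat G ubar udag \<alpha> - ubar \<in> D
     \<and> norm (B (uhat G ubar udag \<alpha> - ubar)) \<le> (C3' * \<rho>) * \<alpha> powr (- (1 / s)) * phi c \<kappa> \<alpha>"
    if al: "0 < \<alpha>" "\<alpha> \<le> onorm G" for \<alpha>
  proof -
    have apos: "0 < u + \<alpha>" if "u \<in> {0..onorm G}" for u using that al by auto
    have cR: "continuous_on {0..onorm G} (\<lambda>u. 1 / (u + \<alpha>))"
      using al by (intro continuous_intros) auto
    have cid: "continuous_on {0..onorm G} (\<lambda>u::real. u)" by (rule continuous_on_id)
    have R: "resolv G \<alpha> = fcalc (\<lambda>u. 1 / (u + \<alpha>)) G" by (rule resolv_eq[OF LG PG al(1)])
    define f1 where "f1 = (\<lambda>u. 1 / (u + \<alpha>) * phi c \<kappa> u)"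
    have cf1: "continuous_on {0..onorm G} f1" unfolding f1_def by (rule continuous_on_mult[OF cR cphi])
    define k where "k = (\<lambda>u. u * f1 u)"
    have ck: "continuous_on {0..onorm G} k" unfolding k_def by (rule continuous_on_mult[OF cid cf1])
    have Gid: "G z = fcalc (\<lambda>u. u) G z" for z using fc_id[OF LG PG] by simp
    have Gk: "G (resolv G \<alpha> (udag - ubar)) = fcalc k G w"
    proof -
      have "resolv G \<alpha> (udag - ubar) = fcalc f1 G w"
        unfolding R source' f1_def by (rule fc_mult[OF LG PG cR cphi, symmetric])
      then show ?thesis unfolding k_def using Gid fc_mult[OF LG PG cid cf1, where x=w] by simp
    qed
    have Uu: "uhat G ubar udag \<alpha> - ubar = fcalc k G w" using Gk by (simp add: uhat_def)
    define e where "e = (\<lambda>u. - (\<alpha> * phi c \<kappa> u / (u + \<alpha>)))"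
    have ce: "continuous_on {0..onorm G} e" unfolding e_def
      using al by (intro continuous_intros cphi) auto
    have Ud: "uhat G ubar udag \<alpha> - udag = fcalc e G w"
    proof -
      have "uhat G ubar udag \<alpha> - udag = G (resolv G \<alpha> (udag - ubar)) - (udag - ubar)"
        by (simp add: uhat_def algebra_simps)
      also have "\<dots> = fcalc k G w - fcalc (phi c \<kappa>) G w" using Gk source' by simp
      also have "\<dots> = fcalc (\<lambda>u. k u - phi c \<kappa> u) G w" by (rule fc_diff[OF LG PG ck cphi, symmetric])
      also have "fcalc (\<lambda>u. k u - phi c \<kappa> u) G = fcalc e G"
      proof (rule fc_cong[OF LG PG], intro ballI)
        fix u assume "u \<in> {0..onorm G}"
        then have "u + \<alpha> \<noteq> 0" using apos by fastforce
        then show "k u - phi c \<kappa> u = e u" by (simp add: k_def f1_def e_def field_simps)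
      qed
      finally show ?thesis .
    qed
    have phia0: "0 \<le> phi c \<kappa> \<alpha>" by (rule phi_nonneg)
    have alG: "\<alpha> \<in> {0<..onorm G}" using al by simp
    have wr: "norm w \<le> \<rho>" by (rule w_le)
    have b1: "\<forall>u\<in>{0..onorm G}. \<bar>e u\<bar> \<le> C0 * phi c \<kappa> \<alpha>"
    proof
      fix u assume u: "u \<in> {0..onorm G}"
      have ea: "\<bar>e u\<bar> = \<alpha> * phi c \<kappa> u / (u + \<alpha>)"
        using apos[OF u] al phi_nonneg[of c \<kappa> u] by (simp add: e_def)
      show "\<bar>e u\<bar> \<le> C0 * phi c \<kappa> \<alpha>"
      proof (cases "u = 0")
        case True
        then show ?thesis using ea C0(1) phia0 by (simp add: phi_def)
      next
        case False
        have "u powr 0 * \<alpha> powr (1 - 0) * phi c \<kappa> u / (u + \<alpha>) \<le> C0 * phi c \<kappa> \<alpha>"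
          using C0(2) alG u by blast
        then show ?thesis using ea False al by simp
      qed
    qed
    have n1: "norm (fcalc e G w) \<le> (C0 * \<rho>) * phi c \<kappa> \<alpha>"
    proof -
      have "norm (fcalc e G w) \<le> C0 * phi c \<kappa> \<alpha> * norm w" by (rule fc_norm[OF LG PG ce b1])
      also have "\<dots> \<le> C0 * phi c \<kappa> \<alpha> * \<rho>" using wr C0(1) phia0 by (intro mult_left_mono) auto
      finally show ?thesis by (simp add: algebra_simps)
    qed
    have cpa: "continuous_on {0..onorm G} (\<lambda>u. u powr (a / s))" by (rule cont_powr0) (use a_pos s0 in simp)
    have negE: "neg_pow Binv a (fcalc e G w) = fcalc (\<lambda>u. u powr (a / s) * e u) G w"
      unfolding negA by (rule fc_mult[OF LG PG cpa ce, symmetric])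
    have b2: "\<forall>u\<in>{0..onorm G}. \<bar>u powr (a / s) * e u\<bar> \<le> \<alpha> powr (a / s) * (C2' * phi c \<kappa> \<alpha>)"
    proof
      fix u assume u: "u \<in> {0..onorm G}"
      have "\<alpha> powr (a / s) * \<alpha> powr (1 - a / s) = \<alpha>" using al by (simp add: powr_add[symmetric])
      then have "\<bar>u powr (a / s) * e u\<bar> = \<alpha> powr (a / s) * (u powr (a / s) * \<alpha> powr (1 - a / s) * phi c \<kappa> u / (u + \<alpha>))"
        using apos[OF u] al phi_nonneg[of c \<kappa> u]
        by (simp add: e_def abs_mult mult_ac)
      also have "\<dots> \<le> \<alpha> powr (a / s) * (C2' * phi c \<kappa> \<alpha>)"
        using C2'(2) alG u by (intro mult_left_mono) auto
      finally show "\<bar>u powr (a / s) * e u\<bar> \<le> \<alpha> powr (a / s) * (C2' * phi c \<kappa> \<alpha>)" .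
    qed
    have n2: "norm (neg_pow Binv a (fcalc e G w)) \<le> (C2' * \<rho>) * \<alpha> powr (a / s) * phi c \<kappa> \<alpha>"
    proof -
      have "norm (neg_pow Binv a (fcalc e G w)) \<le> \<alpha> powr (a / s) * (C2' * phi c \<kappa> \<alpha>) * norm w"
        unfolding negE by (rule fc_norm[OF LG PG continuous_on_mult[OF cpa ce] b2])
      also have "\<dots> \<le> \<alpha> powr (a / s) * (C2' * phi c \<kappa> \<alpha>) * \<rho>"
        using wr C2'(1) phia0 by (intro mult_left_mono) auto
      finally show ?thesis by (simp add: algebra_simps)
    qed
    define f3 where "f3 = (\<lambda>u. u powr (1 - 1 / s) * (phi c \<kappa> u / (u + \<alpha>)))"
    have cf3: "continuous_on {0..onorm G} f3" unfolding f3_def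
      using al th3 s2 by (intro continuous_on_mult cont_powr0 continuous_intros cphi) auto
    define y where "y = fcalc f3 G w"
    have cps: "continuous_on {0..onorm G} (\<lambda>u. u powr (1 / s))" by (rule cont_powr0) (use s0 in simp)
    have By: "Binv y = fcalc k G w"
    proof -
      have "Binv y = fcalc (\<lambda>u. u powr (1 / s) * f3 u) G w"
        unfolding Tx y_def by (rule fc_mult[OF LG PG cps cf3, symmetric])
      also have "fcalc (\<lambda>u. u powr (1 / s) * f3 u) G = fcalc k G"
      proof (rule fc_cong[OF LG PG], intro ballI)
        fix u assume u: "u \<in> {0..onorm G}"
        have "u powr (1 / s) * u powr (1 - 1 / s) = u powr 1" by (simp add: powr_add[symmetric])
        also have "\<dots> = u" using u by simp
        finally have "u powr (1 / s) * u powr (1 - 1 / s) = u" .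
        then show "u powr (1 / s) * f3 u = k u"
          by (simp add: f3_def k_def f1_def mult.assoc[symmetric])
      qed
      finally show ?thesis .
    qed
    have Uy: "uhat G ubar udag \<alpha> - ubar = Binv y" using Uu By by simp
    have b3: "\<forall>u\<in>{0..onorm G}. \<bar>f3 u\<bar> \<le> \<alpha> powr (- (1 / s)) * (C3' * phi c \<kappa> \<alpha>)"
    proof
      fix u assume u: "u \<in> {0..onorm G}"
      have "\<alpha> powr (- (1 / s)) * \<alpha> powr (1 - (1 - 1 / s)) = 1" using al by (simp add: powr_add[symmetric])
      then have "\<bar>f3 u\<bar> = \<alpha> powr (- (1 / s)) * (u powr (1 - 1 / s) * \<alpha> powr (1 - (1 - 1 / s)) * phi c \<kappa> u / (u + \<alpha>))"
        using apos[OF u] al phi_nonneg[of c \<kappa> u]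
        by (simp add: f3_def abs_mult mult_ac)
      also have "\<dots> \<le> \<alpha> powr (- (1 / s)) * (C3' * phi c \<kappa> \<alpha>)"
        using C3'(2) alG u by (intro mult_left_mono) auto
      finally show "\<bar>f3 u\<bar> \<le> \<alpha> powr (- (1 / s)) * (C3' * phi c \<kappa> \<alpha>)" .
    qed
    have n3: "norm y \<le> (C3' * \<rho>) * \<alpha> powr (- (1 / s)) * phi c \<kappa> \<alpha>"
    proof -
      have "norm y \<le> \<alpha> powr (- (1 / s)) * (C3' * phi c \<kappa> \<alpha>) * norm w"
        unfolding y_def by (rule fc_norm[OF LG PG cf3 b3])
      also have "\<dots> \<le> \<alpha> powr (- (1 / s)) * (C3' * phi c \<kappa> \<alpha>) * \<rho>"
        using wr C3'(1) phia0 by (intro mult_left_mono) auto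
      finally show ?thesis by (simp add: algebra_simps)
    qed
    show ?thesis
      using n1 n2 n3 Ud Uy Binv_right by auto
  qed

  have e1: "1 / ((2 * a + 2) / a) = a / s" using a_pos by (simp add: s_def)
  have e2: "1 / ((2 * a + 2) / a * a) = 1 / s" using a_pos by (simp add: s_def)
  show ?thesis
    apply (rule exI[of _ "C0 * \<rho>"], rule exI[of _ "C2' * \<rho>"], rule exI[of _ "C3' * \<rho>"], rule exI[of _ "onorm G"])
    using main C0(1) C2'(1) C3'(1) \<rho>_pos LG unfolding e1 e2 by (auto simp: G_def s_def)
qed


end
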